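(* Let $F$ be a free group of rank at least $2$, and let $K_1,\dots,K_n$ be finitely generated subgroups of infinite index in $F$. Then there exists a subgroup $H\le F$ isomorphic to the free group $F_2$ of rank $2$ such that no nontrivial element of $H$ is conjugate in $F$ to an element of $K_1\cup\dots\cup K_n$. Moreover, $H$ can be chosen to be, in addition, malnormal in $F$.
   Context: A subgroup $H\le F$ is \emph{malnormal} if $gHg^{-1}\cap H=1$ for every $g\in F\setminus H$. *)

theory Defs
  imports "HOL-Algebra.Algebra"
begin

text \<open>Words over an alphabet B with signs: (x, True) stands for x, (x, False) for x inverse.\<close>

definition word_eval :: "('a, 'b) monoid_scheme \<Rightarrow> ('a \<times> bool) list \<Rightarrow> 'a" where
  "word_eval G w = foldr (\<lambda>(x, s) acc. (if s then x else inv\<^bsub>G\<^esub> x) \<otimes>\<^bsub>G\<^esub> acc) w \<one>\<^bsub>G\<^esub>"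

definition reduced_word :: "('a \<times> bool) list \<Rightarrow> bool" where
  "reduced_word w = successively (\<lambda>(x, s) (y, t). \<not> (x = y \<and> s \<noteq> t)) w"

definition free_basis :: "('a, 'b) monoid_scheme \<Rightarrow> 'a set \<Rightarrow> bool" where
  "free_basis G B \<longleftrightarrow> B \<subseteq> carrier G \<and> generate G B = carrier G \<and>
     (\<forall>w. set (map fst w) \<subseteq> B \<and> w \<noteq> [] \<and> reduced_word w \<longrightarrow> word_eval G w \<noteq> one G)"

definition free_group_rank_ge_2 :: "('a, 'b) monoid_scheme \<Rightarrow> bool" where
  "free_group_rank_ge_2 G \<longleftrightarrow> group G \<and> (\<exists>B. free_basis G B \<and> (infinite B \<or> card B \<ge> 2))"

definition free_rank_2_subgroup :: "('a, 'b) monoid_scheme \<Rightarrow> 'a set \<Rightarrow> bool" where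
  "free_rank_2_subgroup G H \<longleftrightarrow> subgroup H G \<and>
     (\<exists>a b. a \<noteq> b \<and> free_basis (G\<lparr>carrier := H\<rparr>) {a, b})"

definition finitely_generated_subgroup :: "('a, 'b) monoid_scheme \<Rightarrow> 'a set \<Rightarrow> bool" where
  "finitely_generated_subgroup G K \<longleftrightarrow>
     (\<exists>S. finite S \<and> S \<subseteq> carrier G \<and> K = generate G S)"

definition malnormal :: "('a, 'b) monoid_scheme \<Rightarrow> 'a set \<Rightarrow> bool" where
  "malnormal G H \<longleftrightarrow>
     (\<forall>g \<in> carrier G - H. {g \<otimes>\<^bsub>G\<^esub> h \<otimes>\<^bsub>G\<^esub> inv\<^bsub>G\<^esub> g | h. h \<in> H} \<inter> H = {\<one>\<^bsub>G\<^esub>})"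

end

theory Submission
  imports Defs
begin


definition inv_l :: "'a \<times> bool \<Rightarrow> 'a \<times> bool" where "inv_l l = (fst l, \<not> snd l)"
definition inv_w :: "('a \<times> bool) list \<Rightarrow> ('a \<times> bool) list" where "inv_w w = rev (map inv_l w)"

lemma inv_l_inv_l[simp]: "inv_l (inv_l l) = l" by (simp add: inv_l_def)
lemma inv_l_neq[simp]: "inv_l l \<noteq> l" "l \<noteq> inv_l l" by (cases l, simp add: inv_l_def)+
lemma inv_l_eq_iff[simp]: "inv_l l = inv_l m \<longleftrightarrow> l = m" by (cases l; cases m; auto simp: inv_l_def)
lemma inv_l_swap: "inv_l l = m \<longleftrightarrow> l = inv_l m" by auto
lemma fst_inv_l[simp]: "fst (inv_l l) = fst l" by (simp add: inv_l_def)

lemma inv_w_Nil[simp]: "inv_w [] = []" by (simp add: inv_w_def)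
lemma inv_w_append[simp]: "inv_w (x @ y) = inv_w y @ inv_w x" by (simp add: inv_w_def)
lemma inv_w_Cons: "inv_w (l # x) = inv_w x @ [inv_l l]" by (simp add: inv_w_def)
lemma inv_w_single[simp]: "inv_w [l] = [inv_l l]" by (simp add: inv_w_def)
lemma inv_w_inv_w[simp]: "inv_w (inv_w w) = w" by (simp add: inv_w_def rev_map comp_def)
lemma length_inv_w[simp]: "length (inv_w w) = length w" by (simp add: inv_w_def)
lemma inv_w_eq_iff[simp]: "inv_w x = inv_w y \<longleftrightarrow> x = y" by (metis inv_w_inv_w)
lemma inv_w_Nil_iff[simp]: "inv_w x = [] \<longleftrightarrow> x = []" by (simp add: inv_w_def)
lemma set_fst_inv_w[simp]: "fst ` set (inv_w w) = fst ` set w"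
  by (force simp add: inv_w_def image_iff)
lemma inv_w_replicate[simp]: "inv_w (replicate n l) = replicate n (inv_l l)"
  by (simp add: inv_w_def)

lemma reduced_iff: "reduced_word w \<longleftrightarrow> successively (\<lambda>l m. m \<noteq> inv_l l) w"
  unfolding reduced_word_def
  by (induct w rule: induct_list012) (auto simp: inv_l_def)

lemma red_Nil[simp]: "reduced_word []" by (simp add: reduced_iff)
lemma red_single[simp]: "reduced_word [l]" by (simp add: reduced_iff)
lemma red_Cons: "reduced_word (l # w) \<longleftrightarrow> reduced_word w \<and> (w = [] \<or> hd w \<noteq> inv_l l)"
  by (cases w) (auto simp: reduced_iff)
lemma red_append: "reduced_word (x @ y) \<longleftrightarrow> reduced_word x \<and> reduced_word y \<and>
   (x = [] \<or> y = [] \<or> hd y \<noteq> inv_l (last x))"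
  by (simp add: reduced_iff successively_append_iff)
lemma red_inv_w: "reduced_word w \<Longrightarrow> reduced_word (inv_w w)"
  unfolding reduced_iff inv_w_def successively_rev successively_map
  by (erule successively_mono) (auto simp: inv_l_def)
lemma red_inv_w_iff[simp]: "reduced_word (inv_w w) \<longleftrightarrow> reduced_word w"
  by (metis red_inv_w inv_w_inv_w)
lemma red_take: "reduced_word w \<Longrightarrow> reduced_word (take k w)"
  by (metis append_take_drop_id red_append)
lemma red_drop: "reduced_word w \<Longrightarrow> reduced_word (drop k w)"
  by (metis append_take_drop_id red_append)

fun cr :: "'a \<times> bool \<Rightarrow> ('a \<times> bool) list \<Rightarrow> ('a \<times> bool) list" where
  "cr l [] = [l]" | "cr l (m # w) = (if m = inv_l l then w else l # m # w)"

definition rd :: "('a \<times> bool) list \<Rightarrow> ('a \<times> bool) list" where "rd w = foldr cr w []"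

lemma rd_Cons[simp]: "rd (l # w) = cr l (rd w)" by (simp add: rd_def)
lemma rd_Nil[simp]: "rd [] = []" by (simp add: rd_def)

lemma red_cr: "reduced_word w \<Longrightarrow> reduced_word (cr l w)"
  by (cases w) (auto simp: red_Cons)
lemma red_rd: "reduced_word (rd w)"
  by (induct w) (auto intro: red_cr)
lemma set_cr: "set (cr l w) \<subseteq> insert l (set w)"
  by (cases w) auto
lemma set_rd: "set (rd w) \<subseteq> set w"
  by (induct w) (use set_cr in fastforce)+
lemma rd_reduced: "reduced_word w \<Longrightarrow> rd w = w"
proof (induct w)
  case (Cons l w)
  then show ?case by (cases w) (auto simp: red_Cons)
qed simp

lemma cancel_lemma:
  assumes "reduced_word x" "reduced_word y"
  shows "\<exists>j. j \<le> length x \<and> j \<le> length y \<and> drop (length x - j) x = inv_w (take j y) \<and>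
     foldr cr x y = take (length x - j) x @ drop j y \<and> reduced_word (take (length x - j) x @ drop j y)"
  using assms(1)
proof (induct x)
  case Nil
  then show ?case using assms(2) by (intro exI[of _ 0]) auto
next
  case (Cons l x)
  then have rx: "reduced_word x" by (simp add: red_Cons)
  from Cons(1)[OF rx] obtain j where j: "j \<le> length x" "j \<le> length y"
    "drop (length x - j) x = inv_w (take j y)" "foldr cr x y = take (length x - j) x @ drop j y"
    "reduced_word (take (length x - j) x @ drop j y)" by blast
  show ?case
  proof (cases "j < length x")
    case True
    then obtain m x' where tx: "take (length x - j) x = m # x'" 
    proof -
      have "take (length x - j) x \<noteq> []" using True by (cases x) auto
      then show ?thesis using that by (cases "take (length x - j) x") auto
    qed
    have "m = hd x" using tx True by (cases x) (auto simp: Suc_diff_le)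
    then have "m \<noteq> inv_l l" using Cons(2) tx by (auto simp: red_Cons)
    have e1: "length (l # x) - j = Suc (length x - j)" using True by simp
    have "foldr cr (l # x) y = cr l (m # x' @ drop j y)" using j(4) tx by simp
    also have "\<dots> = l # m # x' @ drop j y" using \<open>m \<noteq> inv_l l\<close> by simp
    finally have f: "foldr cr (l # x) y = take (length (l # x) - j) (l # x) @ drop j y"
      using e1 tx by simp
    have r: "reduced_word (take (length (l # x) - j) (l # x) @ drop j y)"
      using e1 tx j(5) \<open>m \<noteq> inv_l l\<close> by (simp add: red_Cons)
    have d: "drop (length (l # x) - j) (l # x) = inv_w (take j y)" using e1 j(3) by simp
    show ?thesis using j(1,2) f r d by (intro exI[of _ j]) simp
  next
    case False
    then have jx: "j = length x" using j by auto
    show ?thesis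
    proof (cases "drop j y")
      case Nil
      then show ?thesis using j jx by (intro exI[of _ j]) simp
    next
      case (Cons m y')
      note Cons2 = this
      show ?thesis
      proof (cases "m = inv_l l")
        case True
        have yj: "y ! j = m" using Cons2 by (metis nth_via_drop)
        have jy: "j < length y" using Cons2 by (metis drop_eq_Nil not_less list.simps(3))
        have "take (Suc j) y = take j y @ [m]" using yj jy by (simp add: take_Suc_conv_app_nth)
        have "inv_w (take j y) = x" using j(3) jx by simp
        then have "inv_w (take (Suc j) y) = l # x" using \<open>take (Suc j) y = take j y @ [m]\<close> True
          by simp
        moreover have "drop (Suc j) y = y'" using Cons2 by (metis drop_Suc list.sel(3) tl_drop)
        ultimately show ?thesis using j jx True Cons2 jy red_drop[OF assms(2), of "Suc j"]
          by (intro exI[of _ "Suc j"]) simp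
      next
        case False
        have "reduced_word (m # y')" using Cons2 red_drop[OF assms(2), of j] by simp
        then show ?thesis using j jx Cons2 False
          by (intro exI[of _ j]) (simp add: red_Cons)
      qed
    qed
  qed
qed

lemma rd_append: "rd (x @ y) = foldr cr x (rd y)" by (simp add: rd_def)

context group
begin

definition lv :: "'a \<times> bool \<Rightarrow> 'a" where "lv l = (if snd l then fst l else inv (fst l))"

lemma val_Nil[simp]: "word_eval G [] = \<one>" by (simp add: word_eval_def)
lemma val_Cons: "word_eval G (l # w) = lv l \<otimes> word_eval G w"
  by (cases l) (simp add: word_eval_def lv_def)
lemma lv_closed[simp]: "fst l \<in> carrier G \<Longrightarrow> lv l \<in> carrier G"
  by (simp add: lv_def)
lemma val_closed[simp]: "fst ` set w \<subseteq> carrier G \<Longrightarrow> word_eval G w \<in> carrier G"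
  by (induct w) (auto simp: val_Cons)
lemma val_single[simp]: "fst l \<in> carrier G \<Longrightarrow> word_eval G [l] = lv l"
  by (simp add: val_Cons)
lemma val_append: "fst ` set x \<subseteq> carrier G \<Longrightarrow> fst ` set y \<subseteq> carrier G \<Longrightarrow>
   word_eval G (x @ y) = word_eval G x \<otimes> word_eval G y"
proof (induct x)
  case (Cons l x)
  then have "fst l \<in> carrier G" "fst ` set x \<subseteq> carrier G" by auto
  then show ?case using Cons by (simp add: val_Cons m_assoc)
qed simp
lemma lv_inv_l: "fst l \<in> carrier G \<Longrightarrow> lv (inv_l l) = inv (lv l)"
  by (simp add: lv_def inv_l_def)
lemma val_inv_w: "fst ` set w \<subseteq> carrier G \<Longrightarrow> word_eval G (inv_w w) = inv (word_eval G w)"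
proof (induct w)
  case (Cons l w)
  then have c: "fst l \<in> carrier G" "fst ` set w \<subseteq> carrier G" by auto
  have "word_eval G (inv_w (l # w)) = word_eval G (inv_w w) \<otimes> lv (inv_l l)"
    using c by (simp add: inv_w_Cons val_append)
  also have "\<dots> = inv (word_eval G w) \<otimes> inv (lv l)" using Cons c by (simp add: lv_inv_l)
  also have "\<dots> = inv (lv l \<otimes> word_eval G w)" using c by (simp add: inv_mult_group)
  finally show ?case by (simp add: val_Cons)
qed simp
lemma val_cr: "fst l \<in> carrier G \<Longrightarrow> fst ` set w \<subseteq> carrier G \<Longrightarrow>
   word_eval G (cr l w) = lv l \<otimes> word_eval G w"
proof (cases w)
  case (Cons m w')
  assume c: "fst l \<in> carrier G" "fst ` set w \<subseteq> carrier G"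
  show ?thesis
  proof (cases "m = inv_l l")
    case True
    have "lv l \<otimes> word_eval G w = lv l \<otimes> (inv (lv l) \<otimes> word_eval G w')"
      using Cons True c by (simp add: val_Cons lv_inv_l)
    also have "\<dots> = word_eval G w'" using c Cons by (simp add: m_assoc[symmetric])
    finally show ?thesis using Cons True by simp
  qed (use Cons in \<open>simp add: val_Cons\<close>)
qed (simp add: val_Cons)
lemma val_rd: "fst ` set w \<subseteq> carrier G \<Longrightarrow> word_eval G (rd w) = word_eval G w"
proof (induct w)
  case (Cons l w)
  then have c: "fst l \<in> carrier G" "fst ` set w \<subseteq> carrier G" by auto
  then have "fst ` set (rd w) \<subseteq> carrier G" using set_rd[of w] by auto
  then show ?case using Cons c by (simp add: val_cr val_Cons)
qed simp

lemma val_take_drop: "fst ` set w \<subseteq> carrier G \<Longrightarrow>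
   word_eval G w = word_eval G (take k w) \<otimes> word_eval G (drop k w)"
proof -
  assume a: "fst ` set w \<subseteq> carrier G"
  have "fst ` set (take k w) \<subseteq> carrier G" "fst ` set (drop k w) \<subseteq> carrier G"
    using a set_take_subset[of k w] set_drop_subset[of k w] by auto
  then have "word_eval G (take k w @ drop k w) = word_eval G (take k w) \<otimes> word_eval G (drop k w)"
    by (rule val_append)
  then show ?thesis by simp
qed

end

locale fb = group F for F (structure) + fixes B assumes fbB: "free_basis F B"
begin

abbreviation "val \<equiv> word_eval F"
definition wd :: "('a \<times> bool) list \<Rightarrow> bool" where "wd w \<longleftrightarrow> fst ` set w \<subseteq> B"

lemma B_carr: "B \<subseteq> carrier F" using fbB by (simp add: free_basis_def)
lemma gen_B: "generate F B = carrier F" using fbB by (simp add: free_basis_def)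
lemma wd_carr: "wd w \<Longrightarrow> fst ` set w \<subseteq> carrier F" using B_carr by (auto simp: wd_def)
lemma wd_append[simp]: "wd (x @ y) \<longleftrightarrow> wd x \<and> wd y" by (auto simp: wd_def)
lemma wd_Cons[simp]: "wd (l # y) \<longleftrightarrow> fst l \<in> B \<and> wd y" by (auto simp: wd_def)
lemma wd_Nil[simp]: "wd []" by (auto simp: wd_def)
lemma wd_inv_w[simp]: "wd (inv_w w) \<longleftrightarrow> wd w" by (simp add: wd_def)
lemma wd_take: "wd w \<Longrightarrow> wd (take k w)" by (metis append_take_drop_id wd_append)
lemma wd_drop: "wd w \<Longrightarrow> wd (drop k w)" by (metis append_take_drop_id wd_append)
lemma wd_replicate[simp]: "wd (replicate k l) \<longleftrightarrow> k = 0 \<or> fst l \<in> B" by (cases k) (auto simp: wd_def)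
lemma val_closed'[simp]: "wd w \<Longrightarrow> val w \<in> carrier F" using wd_carr by simp

lemma freeness: "wd w \<Longrightarrow> w \<noteq> [] \<Longrightarrow> reduced_word w \<Longrightarrow> val w \<noteq> \<one>"
  using fbB by (auto simp: free_basis_def wd_def)

lemma uniq: assumes "wd w1" "wd w2" "reduced_word w1" "reduced_word w2" "val w1 = val w2"
  shows "w1 = w2"
proof -
  let ?v = "inv_w w2"
  have rv: "reduced_word ?v" using assms by simp
  obtain j where j: "j \<le> length w1" "j \<le> length ?v" "drop (length w1 - j) w1 = inv_w (take j ?v)"
     "foldr cr w1 ?v = take (length w1 - j) w1 @ drop j ?v"
     "reduced_word (take (length w1 - j) w1 @ drop j ?v)"
    using cancel_lemma[OF assms(3) rv] by blast
  let ?Z = "take (length w1 - j) w1 @ drop j ?v"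
  have "rd (w1 @ ?v) = ?Z" using j(4) rd_reduced[OF rv] by (simp add: rd_append)
  then have "val ?Z = val (w1 @ ?v)" using assms(1,2) wd_carr by (metis val_rd wd_append wd_inv_w)
  also have "\<dots> = val w1 \<otimes> inv (val w2)" using assms wd_carr by (simp add: val_append val_inv_w)
  also have "\<dots> = \<one>" using assms by simp
  finally have "?Z = []" using freeness[of ?Z] j(5) assms(1,2) wd_take wd_drop by auto
  then have "j = length w1" "j = length w2" using j by auto
  then show ?thesis using j(3) by simp
qed

lemma exists_word: assumes "g \<in> generate F A" "A \<subseteq> carrier F"
  shows "\<exists>w. fst ` set w \<subseteq> A \<and> word_eval F w = g"
  using assms(1)
proof induct
  case one
  then show ?case by (intro exI[of _ "[]"]) simp
next
  case (incl h)
  then show ?case using assms(2) by (intro exI[of _ "[(h, True)]"]) (auto simp: lv_def)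
next
  case (inv h)
  then show ?case using assms(2) by (intro exI[of _ "[(h, False)]"]) (auto simp: lv_def)
next
  case (eng h1 h2)
  then obtain w1 w2 where "fst ` set w1 \<subseteq> A" "word_eval F w1 = h1" "fst ` set w2 \<subseteq> A" "word_eval F w2 = h2"
    by blast
  then show ?case using assms(2) by (intro exI[of _ "w1 @ w2"]) (auto simp: val_append)
qed

lemma exists_red_word: assumes "g \<in> generate F A" "A \<subseteq> carrier F"
  shows "\<exists>w. fst ` set w \<subseteq> A \<and> reduced_word w \<and> word_eval F w = g"
proof -
  obtain w where w: "fst ` set w \<subseteq> A" "word_eval F w = g" using exists_word[OF assms] by blast
  have "fst ` set (rd w) \<subseteq> A" using w(1) set_rd[of w] by blast
  moreover have "word_eval F (rd w) = g" using w assms(2) by (simp add: val_rd)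
  ultimately show ?thesis using red_rd by blast
qed

definition nf :: "'a \<Rightarrow> ('a \<times> bool) list" where
  "nf g = (THE w. wd w \<and> reduced_word w \<and> val w = g)"

lemma nf_ex1: "g \<in> carrier F \<Longrightarrow> \<exists>!w. wd w \<and> reduced_word w \<and> val w = g"
  using exists_red_word[of g B] gen_B B_carr uniq by (auto simp: wd_def)

lemma nf_props: assumes "g \<in> carrier F" shows "wd (nf g)" "reduced_word (nf g)" "val (nf g) = g"
  using theI'[OF nf_ex1[OF assms]] unfolding nf_def by auto

lemma nf_val: "wd w \<Longrightarrow> reduced_word w \<Longrightarrow> nf (val w) = w"
  using uniq nf_props[of "val w"] by simp

lemma nf_one[simp]: "nf \<one> = []" using nf_val[of "[]"] by simp

lemma nf_inv: "g \<in> carrier F \<Longrightarrow> nf (inv g) = inv_w (nf g)"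
  using nf_val[of "inv_w (nf g)"] nf_props[of g] wd_carr by (simp add: val_inv_w)

lemma nf_mult: assumes "g \<in> carrier F" "h \<in> carrier F"
  shows "\<exists>j. j \<le> length (nf g) \<and> j \<le> length (nf h) \<and>
    drop (length (nf g) - j) (nf g) = inv_w (take j (nf h)) \<and>
    nf (g \<otimes> h) = take (length (nf g) - j) (nf g) @ drop j (nf h)"
proof -
  note pg = nf_props[OF assms(1)] and ph = nf_props[OF assms(2)]
  obtain j where j: "j \<le> length (nf g)" "j \<le> length (nf h)" 
     "drop (length (nf g) - j) (nf g) = inv_w (take j (nf h))"
     "foldr cr (nf g) (nf h) = take (length (nf g) - j) (nf g) @ drop j (nf h)"
     "reduced_word (take (length (nf g) - j) (nf g) @ drop j (nf h))"
    using cancel_lemma[OF pg(2) ph(2)] by blast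
  let ?Z = "take (length (nf g) - j) (nf g) @ drop j (nf h)"
  have "rd (nf g @ nf h) = ?Z" using j(4) rd_reduced[OF ph(2)] by (simp add: rd_append)
  then have "val ?Z = val (nf g @ nf h)" using pg ph wd_carr by (metis val_rd wd_append)
  also have "\<dots> = g \<otimes> h" using pg ph wd_carr by (simp add: val_append)
  finally have "nf (g \<otimes> h) = ?Z" using nf_val[of ?Z] j(5) pg(1) ph(1) wd_take wd_drop by auto
  then show ?thesis using j by blast
qed

end



context fb
begin

definition KQ :: "'a set \<Rightarrow> 'a set \<Rightarrow> 'a set" where
  "KQ K Q = {k \<otimes> q | k q. k \<in> K \<and> q \<in> Q}"

lemma KQ_mult: assumes "subgroup K F" "Q \<subseteq> carrier F" "k \<in> K" "x \<in> KQ K Q"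
  shows "k \<otimes> x \<in> KQ K Q"
proof -
  obtain k' q where x: "x = k' \<otimes> q" "k' \<in> K" "q \<in> Q" using assms(4) by (auto simp: KQ_def)
  have c: "k \<in> carrier F" "k' \<in> carrier F" "q \<in> carrier F"
    using assms x subgroup.mem_carrier by auto
  have "k \<otimes> x = (k \<otimes> k') \<otimes> q" using x c by (simp add: m_assoc)
  moreover have "k \<otimes> k' \<in> K" using assms x by (simp add: subgroup.m_closed)
  ultimately show ?thesis using x by (auto simp: KQ_def)
qed

lemma KQ_inv_mult: assumes "subgroup K F" "Q \<subseteq> carrier F" "k \<in> K" "k \<otimes> x \<in> KQ K Q"
    "x \<in> carrier F"
  shows "x \<in> KQ K Q"
proof -
  have c: "k \<in> carrier F" using subgroup.mem_carrier[OF assms(1,3)] .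
  have "inv k \<otimes> (k \<otimes> x) \<in> KQ K Q" using KQ_mult[OF assms(1,2) _ assms(4)] assms(1,3)
    by (simp add: subgroup.m_inv_closed)
  then show ?thesis using c assms(5) by (simp add: m_assoc[symmetric])
qed

lemma KQ_I: "k \<in> K \<Longrightarrow> q \<in> Q \<Longrightarrow> k \<otimes> q \<in> KQ K Q"
  by (auto simp: KQ_def)

lemma solve_l: "a \<in> carrier F \<Longrightarrow> t \<in> carrier F \<Longrightarrow> h = a \<otimes> inv t \<Longrightarrow> a = h \<otimes> t"
  by (simp add: m_assoc)

definition Qset :: "'a set \<Rightarrow> 'a set" where
  "Qset S = insert \<one> (\<Union>s\<in>S \<union> (\<lambda>s. inv s) ` S. (\<lambda>p. val (take p (nf s))) ` {..length (nf s)})"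

lemma Qset_finite: "finite S \<Longrightarrow> finite (Qset S)"
  by (simp add: Qset_def)

lemma Qset_carr: "S \<subseteq> carrier F \<Longrightarrow> Qset S \<subseteq> carrier F"
proof -
  assume S: "S \<subseteq> carrier F"
  have "val (take p (nf s)) \<in> carrier F" if "s \<in> carrier F" for s p
    using nf_props[OF that] wd_take by auto
  then show ?thesis using S by (auto simp: Qset_def)
qed

lemma Qset_pref: assumes "s \<in> S \<union> (\<lambda>s. inv s) ` S" "s \<in> carrier F"
  shows "val (take p (nf s)) \<in> Qset S"
proof -
  have "take p (nf s) = take (min p (length (nf s))) (nf s)" by (simp add: min_def)
  then show ?thesis using assms unfolding Qset_def by force
qed

lemma lemmaA: assumes S: "S \<subseteq> carrier F" and k: "k \<in> generate F S"
  shows "val (take p (nf k)) \<in> KQ (generate F S) (Qset S)"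
  using k
proof (induct arbitrary: p)
  case one
  have "\<one> \<in> Qset S" by (simp add: Qset_def)
  then have "\<one> \<otimes> \<one> \<in> KQ (generate F S) (Qset S)"
    using generate.one[of F S] by (intro KQ_I)
  then show ?case by simp
next
  case (incl h)
  have "\<one> \<otimes> val (take p (nf h)) \<in> KQ (generate F S) (Qset S)" unfolding KQ_def
    using generate.one[of F S] Qset_pref[of h S p] incl S by blast
  then show ?case using incl S nf_props[of h] wd_take by auto
next
  case (inv h)
  have hc: "inv h \<in> carrier F" using inv S by auto
  have "\<one> \<otimes> val (take p (nf (inv h))) \<in> KQ (generate F S) (Qset S)" unfolding KQ_def
    using generate.one[of F S] Qset_pref[of "inv h" S p] inv hc by blast
  then show ?case using hc nf_props[of "inv h"] wd_take by auto
next
  case (eng h1 h2)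
  have sg: "subgroup (generate F S) F" using S by (rule generate_is_subgroup)
  have c1: "h1 \<in> carrier F" and c2: "h2 \<in> carrier F"
    using subgroup.mem_carrier[OF sg eng(1)] subgroup.mem_carrier[OF sg eng(3)] by auto
  have Qc: "Qset S \<subseteq> carrier F" using Qset_carr[OF S] .
  obtain j where j: "j \<le> length (nf h1)" "j \<le> length (nf h2)"
    "drop (length (nf h1) - j) (nf h1) = inv_w (take j (nf h2))"
    "nf (h1 \<otimes> h2) = take (length (nf h1) - j) (nf h1) @ drop j (nf h2)"
    using nf_mult[OF c1 c2] by blast
  define A where "A = take (length (nf h1) - j) (nf h1)"
  define D where "D = drop j (nf h2)"
  note p1 = nf_props[OF c1] and p2 = nf_props[OF c2]
  have lA: "length A = length (nf h1) - j" using j by (simp add: A_def)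
  show ?case
  proof (cases "p \<le> length A")
    case True
    have "take p (nf (h1 \<otimes> h2)) = take p (nf h1)" using True j(4) lA
      by (simp add: A_def min_def)
    then show ?thesis using eng(2) by simp
  next
    case False
    define p' where "p' = p - length A"
    have tp: "take p (nf (h1 \<otimes> h2)) = A @ take p' D" using False j(4)
      by (simp add: A_def D_def p'_def)
    have wA: "wd A" "wd D" using p1 p2 wd_take wd_drop by (auto simp: A_def D_def)
    have wT: "wd (take j (nf h2))" "wd (take p' D)" using p2 wA wd_take by auto
    have "h1 = val A \<otimes> val (drop (length (nf h1) - j) (nf h1))"
      using p1 val_take_drop[of "nf h1" "length (nf h1) - j"] wd_carr by (simp add: A_def)
    also have "\<dots> = val A \<otimes> inv (val (take j (nf h2)))"
      using j(3) wT wd_carr by (simp add: val_inv_w)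
    finally have h1eq: "h1 = val A \<otimes> inv (val (take j (nf h2)))" .
    have vA: "val A = h1 \<otimes> val (take j (nf h2))"
      by (rule solve_l[OF _ _ h1eq]) (use wA wT in simp_all)
    have "take (j + p') (nf h2) = take j (nf h2) @ take p' D" by (simp add: D_def take_add)
    then have vt: "val (take (j + p') (nf h2)) = val (take j (nf h2)) \<otimes> val (take p' D)"
      using wT wd_carr by (simp add: val_append)
    have "val (take p (nf (h1 \<otimes> h2))) = val A \<otimes> val (take p' D)"
      using tp wA wT wd_carr by (simp add: val_append)
    also have "\<dots> = h1 \<otimes> val (take (j + p') (nf h2))"
      using vA vt wT c1 by (simp add: m_assoc)
    finally show ?thesis using KQ_mult[OF sg Qc eng(1) eng(4)] by simp
  qed
qed

lemma red_replicate: "reduced_word (replicate m c)"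
  by (induct m) (auto simp: red_Cons)

lemma set_rep_carr: "fst c \<in> carrier F \<Longrightarrow> fst ` set (replicate i c) \<subseteq> carrier F"
  by (cases i) auto

lemma val_replicate_add: "fst c \<in> carrier F \<Longrightarrow>
  val (replicate (i + j) c) = val (replicate i c) \<otimes> val (replicate j c)"
  using val_append[OF set_rep_carr set_rep_carr] by (simp add: replicate_add)

lemma val_rep_comm: "fst c \<in> carrier F \<Longrightarrow>
  val (replicate i c) \<otimes> val (replicate j c) = val (replicate j c) \<otimes> val (replicate i c)"
  by (metis add.commute val_replicate_add)

lemma ext_lemma:
  assumes K: "subgroup K F" and Q: "finite Q" "Q \<subseteq> carrier F" and inf: "infinite (rcosets K)"
    and x: "x \<in> carrier F" and e: "fst e \<in> B" and ab: "a \<in> B" "b \<in> B" "a \<noteq> b"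
  shows "\<exists>v. wd v \<and> reduced_word v \<and> (v = [] \<or> hd v \<noteq> inv_l e) \<and> x \<otimes> val v \<notin> KQ K Q"
proof (rule ccontr)
  assume "\<not> ?thesis"
  then have H: "\<And>v. wd v \<Longrightarrow> reduced_word v \<Longrightarrow> (v = [] \<or> hd v \<noteq> inv_l e) \<Longrightarrow> x \<otimes> val v \<in> KQ K Q"
    by blast
  define c where "c = (if fst e = a then (b, True) else (a, True))"
  have cB: "fst c \<in> B" and ce: "fst c \<noteq> fst e" using ab by (auto simp: c_def)
  have cc: "fst c \<in> carrier F" using cB B_carr by auto
  have cne: "c \<noteq> e" "c \<noteq> inv_l e" using ce by auto
  have "\<forall>j. \<exists>q. q \<in> Q \<and> (\<exists>k\<in>K. x \<otimes> val (replicate j c) = k \<otimes> q)"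
  proof
    fix j
    have "x \<otimes> val (replicate j c) \<in> KQ K Q"
      using H[of "replicate j c"] cB cne red_replicate[of j c] by (cases j) auto
    then show "\<exists>q. q \<in> Q \<and> (\<exists>k\<in>K. x \<otimes> val (replicate j c) = k \<otimes> q)" by (auto simp: KQ_def)
  qed
  then obtain qf where qf: "\<And>j. qf j \<in> Q" "\<And>j. \<exists>k\<in>K. x \<otimes> val (replicate j c) = k \<otimes> qf j"
    by metis
  have "\<not> inj qf"
  proof
    assume "inj qf"
    then have "finite (UNIV :: nat set)" using Q(1) qf(1)
      by (metis finite_imageD finite_subset image_subsetI)
    then show False by simp
  qed
  then obtain j1 j2 where jj: "j1 \<noteq> j2" "qf j1 = qf j2" unfolding inj_def by blast
  have "\<exists>i1 i2. i1 < i2 \<and> qf i1 = qf i2" using jj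
    by (metis linorder_neqE_nat)
  then obtain i1 i2 where ii: "i1 < i2" "qf i1 = qf i2" by blast
  obtain k1 k2 where k: "k1 \<in> K" "k2 \<in> K" "x \<otimes> val (replicate i1 c) = k1 \<otimes> qf i1"
      "x \<otimes> val (replicate i2 c) = k2 \<otimes> qf i1"
    using qf(2)[of i1] qf(2)[of i2] ii by metis
  define m where "m = i2 - i1"
  have m0: "m > 0" using ii by (simp add: m_def)
  define P where "P = val (replicate i1 c)"
  define C where "C = val (replicate m c)"
  have PC: "P \<in> carrier F" "C \<in> carrier F"
    using val_closed[OF set_rep_carr[OF cc]] by (auto simp: P_def C_def)
  have kc: "k1 \<in> carrier F" "k2 \<in> carrier F" "qf i1 \<in> carrier F"
    using subgroup.mem_carrier[OF K k(1)] subgroup.mem_carrier[OF K k(2)] qf(1)[of i1] Q(2) by auto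
  have v2: "val (replicate i2 c) = P \<otimes> C"
    using val_replicate_add[OF cc, of i1 m] ii by (simp add: P_def C_def m_def)
  have comm: "P \<otimes> C = C \<otimes> P" using val_rep_comm[OF cc] by (simp add: P_def C_def)
  have k0: "x \<otimes> C \<otimes> inv x \<in> K"
  proof -
    have "(x \<otimes> P \<otimes> C) \<otimes> inv (x \<otimes> P) = (k2 \<otimes> qf i1) \<otimes> inv (k1 \<otimes> qf i1)"
    proof -
      have e1: "x \<otimes> P \<otimes> C = k2 \<otimes> qf i1" using k(4) v2 x PC by (simp add: m_assoc P_def)
      have e2: "x \<otimes> P = k1 \<otimes> qf i1" using k(3) by (simp add: P_def)
      show ?thesis by (simp only: e1) (simp only: e2)
    qed
    also have "\<dots> = k2 \<otimes> inv k1" using kc by (simp add: inv_mult_group m_assoc m_assoc[symmetric, of "qf i1" "inv (qf i1)"])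
    finally have eq: "(x \<otimes> P \<otimes> C) \<otimes> inv (x \<otimes> P) = k2 \<otimes> inv k1" .
    have "(x \<otimes> P \<otimes> C) \<otimes> inv (x \<otimes> P) = x \<otimes> (P \<otimes> C) \<otimes> inv P \<otimes> inv x"
      using x PC by (simp add: inv_mult_group m_assoc)
    also have "\<dots> = x \<otimes> C \<otimes> (P \<otimes> inv P) \<otimes> inv x" using comm x PC by (simp add: m_assoc)
    also have "\<dots> = x \<otimes> C \<otimes> inv x" using x PC by simp
    finally show ?thesis using eq k K by (metis subgroup.m_closed subgroup.m_inv_closed)
  qed
  have allKQ: "y \<in> KQ K Q" if y: "y \<in> carrier F" for y
  proof -
    define v where "v = nf (inv x \<otimes> y)"
    have vc: "inv x \<otimes> y \<in> carrier F" using x y by simp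
    note pv = nf_props[OF vc]
    have xv: "x \<otimes> val v = y" using pv x y by (simp add: v_def m_assoc[symmetric])
    show ?thesis
    proof (cases "v = [] \<or> hd v \<noteq> inv_l e")
      case True
      then show ?thesis using H[of v] pv xv by (simp add: v_def)
    next
      case False
      then have hv: "v \<noteq> []" "hd v = inv_l e" by auto
      have r: "reduced_word (replicate m c @ v)" using hv pv m0 cne red_replicate[of m c]
        by (auto simp: red_append v_def)
      have "x \<otimes> val (replicate m c @ v) \<in> KQ K Q"
        using H[of "replicate m c @ v"] r pv cB m0 cne by (cases m) (auto simp: v_def)
      moreover have "x \<otimes> val (replicate m c @ v) = (x \<otimes> C \<otimes> inv x) \<otimes> y"
      proof -
        have "x \<otimes> val (replicate m c @ v) = x \<otimes> C \<otimes> val v"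
        proof -
          have "val (replicate m c @ v) = C \<otimes> val v"
            using val_append[OF set_rep_carr[OF cc] wd_carr[OF pv(1)]] by (simp add: C_def v_def)
          then show ?thesis using pv x y PC by (simp add: m_assoc v_def)
        qed
        also have "\<dots> = (x \<otimes> C \<otimes> inv x) \<otimes> (x \<otimes> val v)"
          using pv x y PC by (simp add: m_assoc v_def m_assoc[symmetric, of x "inv x"])
        finally show ?thesis using xv by simp
      qed
      ultimately show ?thesis using KQ_inv_mult[OF K Q(2) k0] y by simp
    qed
  qed
  have "rcosets K \<subseteq> (\<lambda>q. K #> q) ` Q"
  proof
    fix Z assume "Z \<in> rcosets K"
    then obtain y where y: "y \<in> carrier F" "Z = K #> y" by (auto simp: RCOSETS_def)
    then obtain k q where kq: "k \<in> K" "q \<in> Q" "y = k \<otimes> q" using allKQ[OF y(1)] by (auto simp: KQ_def)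
    have "K #> y = (K #> k) #> q" using kq Q(2) subgroup.mem_carrier[OF K kq(1)]
      coset_mult_assoc[OF subgroup.subset[OF K], of k q] by auto
    also have "\<dots> = K #> q" using subgroup.rcos_const[OF K is_group kq(1)] by simp
    finally show "Z \<in> (\<lambda>q. K #> q) ` Q" using y kq by auto
  qed
  then have "finite (rcosets K)" using Q(1) by (meson finite_imageI finite_subset)
  then show False using inf by simp
qed

lemma u_exists:
  assumes "finite P"
    and hP: "\<forall>(i,q)\<in>P. subgroup (K i) F \<and> finite (Q i) \<and> Q i \<subseteq> carrier F \<and>
        infinite (rcosets (K i)) \<and> q \<in> carrier F"
    and ab: "a \<in> B" "b \<in> B" "a \<noteq> b"
  shows "\<exists>u. wd u \<and> reduced_word u \<and> u \<noteq> [] \<and>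
     (\<forall>(i,q)\<in>P. \<exists>p. q \<otimes> val (take p u) \<notin> KQ (K i) (Q i))"
  using assms(1,2)
proof (induct rule: finite_induct)
  case empty
  then show ?case using ab by (intro exI[of _ "[(a, True)]"]) simp
next
  case (insert z P)
  obtain i0 q0 where z: "z = (i0, q0)" by force
  from insert obtain u where u: "wd u" "reduced_word u" "u \<noteq> []"
     "\<forall>(i,q)\<in>P. \<exists>p. q \<otimes> val (take p u) \<notin> KQ (K i) (Q i)" by auto
  have h0: "subgroup (K i0) F" "finite (Q i0)" "Q i0 \<subseteq> carrier F" "infinite (rcosets (K i0))"
     "q0 \<in> carrier F" using insert(4) z by auto
  show ?case
  proof (cases "\<exists>p. q0 \<otimes> val (take p u) \<notin> KQ (K i0) (Q i0)")
    case True
    then show ?thesis using u z by (intro exI[of _ u]) auto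
  next
    case False
    have xc: "q0 \<otimes> val u \<in> carrier F" using h0 u by simp
    have eB: "fst (last u) \<in> B" using u(1,3) by (auto simp: wd_def)
    obtain v where v: "wd v" "reduced_word v" "v = [] \<or> hd v \<noteq> inv_l (last u)"
        "q0 \<otimes> val u \<otimes> val v \<notin> KQ (K i0) (Q i0)"
      using ext_lemma[OF h0(1,2,3,4) xc eB ab] by blast
    let ?u = "u @ v"
    have r: "reduced_word ?u" using u v by (auto simp: red_append)
    have old: "\<exists>p. q \<otimes> val (take p ?u) \<notin> KQ (K i) (Q i)" if iq: "(i, q) \<in> P" for i q
    proof -
      obtain p where "q \<otimes> val (take p u) \<notin> KQ (K i) (Q i)" using bspec[OF u(4) iq] by auto
      moreover have "take (min p (length u)) ?u = take p u" by (simp add: min_def)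
      ultimately show ?thesis by metis
    qed
    have "q0 \<otimes> val (take (length ?u) ?u) \<notin> KQ (K i0) (Q i0)"
      using v(4) u v h0 wd_carr by (simp add: val_append m_assoc)
    then have new: "\<exists>p. q0 \<otimes> val (take p ?u) \<notin> KQ (K i0) (Q i0)" by blast
    show ?thesis using r u v old new z by (intro exI[of _ ?u]) auto
  qed
qed

end


definition good :: "nat \<Rightarrow> nat \<Rightarrow> ('a \<times> bool) list \<Rightarrow> ('a \<times> bool) \<Rightarrow> ('a \<times> bool) \<Rightarrow> bool" where
  "good N M w c d \<longleftrightarrow> length w = 2*N+M+2 \<and> (\<forall>i<N. w!i = c) \<and> w!N = d \<and> w!(N+M+1) = d \<and>
     (\<forall>i. N+M+2 \<le> i \<longrightarrow> i < 2*N+M+2 \<longrightarrow> w!i = c) \<and> fst c \<noteq> fst d"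

lemma comma_free:
  assumes NM: "M + 3 \<le> N"
    and ga: "good N M \<alpha> ca da" and gb: "good N M \<beta> cb db" and gc: "good N M \<gamma> cc dc"
    and k: "k < 2*N+M+2" and eq: "\<And>i. i < 2*N+M+2 \<Longrightarrow> (\<alpha> @ \<beta>) ! (k+i) = \<gamma> ! i"
  shows "k = 0"
proof (rule ccontr)
  assume k0: "k \<noteq> 0"
  define L where "L = 2*N+M+2"
  define e where "e = fst cc"
  have la: "length \<alpha> = L" using ga by (simp add: good_def L_def)
  have A: "\<And>j. j < L \<Longrightarrow> (\<alpha> @ \<beta>) ! j = \<alpha> ! j" using la by (simp add: nth_append)
  have Bt: "\<And>j. L \<le> j \<Longrightarrow> (\<alpha> @ \<beta>) ! j = \<beta> ! (j - L)" using la by (simp add: nth_append)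
  have g1: "\<And>i. i < N \<Longrightarrow> fst ((\<alpha> @ \<beta>) ! (k+i)) = e"
    using eq gc by (auto simp: good_def e_def)
  have g2: "\<And>i. L - N \<le> i \<Longrightarrow> i < L \<Longrightarrow> fst ((\<alpha> @ \<beta>) ! (k+i)) = e"
  proof -
    fix i assume "L - N \<le> i" "i < L"
    then have "\<gamma> ! i = cc" using gc by (auto simp: good_def L_def)
    then show "fst ((\<alpha> @ \<beta>) ! (k+i)) = e" using eq \<open>i < L\<close> by (simp add: e_def L_def)
  qed
  have kL: "k < L" using k by (simp add: L_def)
  show False
  proof (cases "fst ca = e")
    case True
    have dae: "fst da \<noteq> e" using True ga by (auto simp: good_def)
    show False
    proof (cases "k \<le> N")
      case True
      have "fst ((\<alpha> @ \<beta>) ! (k + (N - k))) = e" using g1[of "N-k"] k0 True by simp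
      moreover have "(\<alpha> @ \<beta>) ! (k + (N - k)) = da" using True A[of N] ga by (simp add: good_def L_def)
      ultimately show False using dae by simp
    next
      case False
      show False
      proof (cases "k \<le> N+M+1")
        case True
        have "fst ((\<alpha> @ \<beta>) ! (k + (N+M+1 - k))) = e" using g1[of "N+M+1-k"] True False NM by simp
        moreover have "(\<alpha> @ \<beta>) ! (k + (N+M+1 - k)) = da" using True A[of "N+M+1"] ga
          by (simp add: good_def L_def)
        ultimately show False using dae by simp
      next
        case False
        then have kb: "N+M+2 \<le> k" by simp
        show False
        proof (cases "fst cb = e")
          case True
          have dbe: "fst db \<noteq> e" using True gb by (auto simp: good_def)
          define i where "i = L + (N+M+1) - k"
          have i: "L - N \<le> i" "i < L" using kb kL by (auto simp: i_def L_def)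
          have "k + i = L + (N+M+1)" using kL by (simp add: i_def)
          then have "(\<alpha> @ \<beta>) ! (k+i) = db" using Bt[of "k+i"] gb by (simp add: good_def)
          then show False using g2[OF i] dbe by simp
        next
          case False
          show False
          proof (cases "k - N < N")
            case True
            define i where "i = L - N"
            have i: "L - N \<le> i" "i < L" using NM by (auto simp: i_def L_def)
            have "k + i = L + (k - N)" using kb by (simp add: i_def L_def)
            then have "(\<alpha> @ \<beta>) ! (k+i) = cb" using Bt[of "k+i"] gb True by (simp add: good_def)
            then show False using g2[OF i] False by simp
          next
            case False2: False
            define i where "i = L - 1"
            have i: "L - N \<le> i" "i < L" using NM by (auto simp: i_def L_def)
            have "k + i = L + (k - 1)" using kb by (simp add: i_def L_def)
            moreover have "N+M+2 \<le> k - 1" "k - 1 < 2*N+M+2" using False2 NM kL by (auto simp: L_def)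
            ultimately have "(\<alpha> @ \<beta>) ! (k+i) = cb" using Bt[of "k+i"] gb by (simp add: good_def)
            then show False using g2[OF i] False by simp
          qed
        qed
      qed
    qed
  next
    case False
    show False
    proof (cases "k < N")
      case True
      have "(\<alpha> @ \<beta>) ! (k+0) = ca" using A[of k] True ga by (simp add: good_def L_def)
      then show False using g1[of 0] False NM by simp
    next
      case False2: False
      show False
      proof (cases "k < N+M+2")
        case True
        have "N+M+2 \<le> k + (N - 1)" "k + (N - 1) < L" using True False2 NM by (auto simp: L_def)
        then have "(\<alpha> @ \<beta>) ! (k + (N - 1)) = ca" using A ga by (simp add: good_def L_def)
        then show False using g1[of "N - 1"] False NM by simp
      next
        case False3: False
        have "(\<alpha> @ \<beta>) ! (k+0) = ca" using A[of k] kL False3 ga by (simp add: good_def L_def)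
        then show False using g1[of 0] False NM by simp
      qed
    qed
  qed
qed

lemma concat_nth_unif:
  assumes "\<forall>w\<in>set ws. length w = L" "q < length ws" "j < L"
  shows "concat ws ! (q*L + j) = (ws!q)!j"
  using assms
proof (induct ws arbitrary: q)
  case (Cons w ws)
  show ?case
  proof (cases q)
    case 0
    then show ?thesis using Cons by (simp add: nth_append)
  next
    case (Suc q')
    have "concat (w # ws) ! (q*L + j) = concat ws ! (q'*L + j)"
      using Cons Suc by (simp add: nth_append)
    then show ?thesis using Cons Suc by simp
  qed
qed simp

lemma length_concat_unif: "\<forall>w\<in>set ws. length w = L \<Longrightarrow> length (concat ws) = length ws * L"
  by (induct ws) auto

lemma take_concat_unif: "\<forall>w\<in>set ws. length w = L \<Longrightarrow> take (q*L) (concat ws) = concat (take q ws)"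
proof (induct ws arbitrary: q)
  case (Cons w ws)
  then show ?case by (cases q) auto
qed simp

lemma aligned:
  assumes NM: "M + 3 \<le> N"
    and ws: "\<forall>w\<in>set ws. \<exists>c d. good N M w c d"
    and gc: "good N M \<gamma> cc dc"
    and eq: "\<And>i. i < 2*N+M+2 \<Longrightarrow> concat ws ! (pos + i) = \<gamma> ! i"
    and len: "pos + (2*N+M+2) \<le> length (concat ws)"
  shows "(2*N+M+2) dvd pos"
proof -
  define L where "L = 2*N+M+2"
  have lw: "\<forall>w\<in>set ws. length w = L" using ws by (auto simp: good_def L_def)
  define q where "q = pos div L"
  define k where "k = pos mod L"
  have L0: "L > 0" by (simp add: L_def)
  have pos: "pos = q*L + k" by (simp add: q_def k_def)
  have kL: "k < L" using L0 by (simp add: k_def)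
  show ?thesis
  proof (cases "k = 0")
    case True
    then show ?thesis unfolding k_def L_def by (simp add: dvd_eq_mod_eq_0)
  next
    case False
    have "q*L + k + L \<le> length ws * L" using len pos length_concat_unif[OF lw] by (simp add: L_def)
    then have "(q+1)*L < length ws * L" using False by simp
    then have q1: "q + 1 < length ws" by (meson mult_less_cancel2)
    obtain ca da cb db where ga: "good N M (ws!q) ca da" and gb: "good N M (ws!(q+1)) cb db"
      using ws q1 by (metis Suc_lessD add.commute nth_mem plus_1_eq_Suc)
    have "((ws!q) @ (ws!(q+1))) ! (k+i) = \<gamma> ! i" if i: "i < 2*N+M+2" for i
    proof (cases "k + i < L")
      case True
      have "((ws!q) @ (ws!(q+1))) ! (k+i) = (ws!q) ! (k+i)"
        using True lw q1 by (simp add: nth_append)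
      also have "\<dots> = concat ws ! (q*L + (k+i))" using concat_nth_unif[OF lw _ True] q1 by simp
      also have "\<dots> = \<gamma> ! i" using eq[OF i] pos by (simp add: add.assoc)
      finally show ?thesis .
    next
      case False
      have kiL: "k + i - L < L" using kL i by (simp add: L_def)
      have "((ws!q) @ (ws!(q+1))) ! (k+i) = (ws!(q+1)) ! (k+i-L)"
        using False lw q1 by (simp add: nth_append)
      also have "\<dots> = concat ws ! ((q+1)*L + (k+i-L))" using concat_nth_unif[OF lw q1 kiL] by simp
      also have "(q+1)*L + (k+i-L) = pos + i" using False pos by simp
      also have "concat ws ! (pos + i) = \<gamma> ! i" using eq[OF i] .
      finally show ?thesis .
    qed
    then have "k = 0" using comma_free[OF NM ga gb gc] kL by (simp add: L_def)
    then show ?thesis using False by simp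
  qed
qed



lemma hd_inv_w: "w \<noteq> [] \<Longrightarrow> hd (inv_w w) = inv_l (last w)"
  by (simp add: inv_w_def hd_rev hd_map last_map)
lemma last_inv_w: "w \<noteq> [] \<Longrightarrow> last (inv_w w) = inv_l (hd w)"
  by (simp add: inv_w_def last_rev last_map hd_map)

locale blkl = fb +
  fixes a b :: 'a and u :: "('a \<times> bool) list"
  assumes aB: "a \<in> B" and bB: "b \<in> B" and ab: "a \<noteq> b"
    and wu: "wd u" and ru: "reduced_word u" and un: "u \<noteq> []"
begin

definition "NN = 2 * length u + 6"
definition "MM = 2 * length u + 3"
definition "cands = {(a,True),(a,False),(b,True),(b,False)}"
definition "pick x y = (SOME c. c \<in> cands \<and> c \<noteq> x \<and> c \<noteq> y)"

lemma pick_ex: "\<exists>c. c \<in> cands \<and> c \<noteq> x \<and> c \<noteq> y"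
proof -
  have "(a,True) \<notin> {x,y} \<or> (a,False) \<notin> {x,y} \<or> (b,True) \<notin> {x,y}" using ab by auto
  then show ?thesis by (auto simp: cands_def)
qed

lemma pick: "pick x y \<in> cands" "pick x y \<noteq> x" "pick x y \<noteq> y"
  using someI_ex[OF pick_ex[of x y]] unfolding pick_def by auto

lemma cands_B: "c \<in> cands \<Longrightarrow> fst c \<in> B" using aB bB by (auto simp: cands_def)

definition "c1 d = pick (inv_l d) (inv_l (hd u))"
definition "c2 = pick (inv_l (last u)) (last u)"
definition "c3 d = pick (hd u) (inv_l d)"
definition "Sd d = [c1 d] @ u @ [c2] @ inv_w u @ [c3 d]"
definition "bw c d S = replicate NN c @ [d] @ S @ [d] @ replicate NN c"
definition "XX = bw (a,True) (b,True) (Sd (b,True))"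
definition "YY = bw (b,True) (a,True) (Sd (a,True))"

lemma len_Sd: "length (Sd d) = MM" by (simp add: Sd_def MM_def)
lemma len_inv_Sd: "length (inv_w (Sd d)) = MM" by (simp add: len_Sd)

lemma inv_bw: "inv_w (bw c d S) = bw (inv_l c) (inv_l d) (inv_w S)"
  by (simp add: bw_def inv_w_Cons)

lemma NM: "MM + 3 \<le> NN" by (simp add: NN_def MM_def)

lemma good_bw: assumes "length S = MM" "fst c \<noteq> fst d" shows "good NN MM (bw c d S) c d"
proof -
  have l: "length (bw c d S) = 2*NN+MM+2" using assms by (simp add: bw_def)
  have i1: "\<forall>i<NN. bw c d S ! i = c" by (simp add: bw_def nth_append)
  have i2: "bw c d S ! NN = d" by (simp add: bw_def nth_append)
  have i3: "bw c d S ! (NN+MM+1) = d" using assms by (simp add: bw_def nth_append)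
  have i4: "\<forall>i. NN+MM+2 \<le> i \<longrightarrow> i < 2*NN+MM+2 \<longrightarrow> bw c d S ! i = c"
    using assms by (auto simp: bw_def nth_append)
  show ?thesis using l i1 i2 i3 i4 assms by (simp add: good_def)
qed

lemma u_in_bw: assumes "S = [z] @ u @ rest" shows "take (length u) (drop (NN+2) (bw c d S)) = u"
  using assms by (simp add: bw_def)

lemma inv_Sd: "inv_w (Sd d) = [inv_l (c3 d)] @ u @ [inv_l c2] @ inv_w u @ [inv_l (c1 d)]"
  by (simp add: Sd_def inv_w_Cons)

lemma red_bw: assumes "reduced_word S" "S \<noteq> []" "hd S \<noteq> inv_l d" "last S \<noteq> inv_l d"
   "fst c \<noteq> fst d"
  shows "reduced_word (bw c d S)"
proof -
  have n1: "d \<noteq> inv_l c" "c \<noteq> inv_l d" using assms(5) by (auto simp: inv_l_def)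
  have "reduced_word ([d] @ replicate NN c)" using n1 red_replicate[of NN c]
    by (cases NN) (auto simp: red_Cons)
  moreover have "reduced_word (S @ [d] @ replicate NN c)" using calculation assms
    by (subst red_append) (auto simp: inv_l_swap)
  moreover have "reduced_word ([d] @ S @ [d] @ replicate NN c)" using calculation assms
    by (simp add: red_Cons)
  moreover have "reduced_word (replicate NN c @ [d] @ S @ [d] @ replicate NN c)"
    using calculation n1 red_replicate[of NN c] by (subst red_append) (simp add: NN_def)
  ultimately show ?thesis by (simp add: bw_def)
qed

lemma red_Sd: "reduced_word (Sd d)"
proof -
  have p1: "c1 d \<noteq> inv_l (hd u)" and p2: "c2 \<noteq> inv_l (last u)" "c2 \<noteq> last u"
    and p3: "c3 d \<noteq> hd u" using pick by (auto simp: c1_def c2_def c3_def)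
  have r1: "reduced_word (inv_w u @ [c3 d])" using ru un p3
    by (subst red_append) (auto simp: last_inv_w)
  have r2: "reduced_word ([c2] @ inv_w u @ [c3 d])" using r1 un p2
    by (auto simp: red_Cons hd_inv_w)
  have r3: "reduced_word (u @ [c2] @ inv_w u @ [c3 d])" using r2 ru un p2
    by (subst red_append) (auto simp: inv_l_swap)
  have "reduced_word ([c1 d] @ u @ [c2] @ inv_w u @ [c3 d])" using r3 un p1
    by (auto simp: red_Cons inv_l_swap)
  then show ?thesis by (simp add: Sd_def)
qed

lemma hd_Sd: "hd (Sd d) = c1 d" by (simp add: Sd_def)
lemma last_Sd: "last (Sd d) = c3 d" by (simp add: Sd_def)
lemma Sd_ne: "Sd d \<noteq> []" by (simp add: Sd_def)
lemma wd_Sd: "wd (Sd d)"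
  using wu pick cands_B by (simp add: Sd_def c1_def c2_def c3_def)

lemma red_bwSd: assumes "fst c \<noteq> fst d" shows "reduced_word (bw c d (Sd d))"
proof -
  have "c1 d \<noteq> inv_l d" "c3 d \<noteq> inv_l d" using pick by (auto simp: c1_def c3_def)
  then show ?thesis using red_bw[OF red_Sd Sd_ne _ _ assms] by (simp add: hd_Sd last_Sd)
qed

lemma red_inv_bwSd: assumes "fst c \<noteq> fst d" shows "reduced_word (inv_w (bw c d (Sd d)))"
  using red_bwSd[OF assms] by simp

lemma wd_bw: "fst c \<in> B \<Longrightarrow> fst d \<in> B \<Longrightarrow> wd S \<Longrightarrow> wd (bw c d S)"
  by (simp add: bw_def NN_def)

lemma hd_bw: "hd (bw c d S) = c" by (simp add: bw_def NN_def)
lemma last_bw: "last (bw c d S) = c" by (simp add: bw_def NN_def)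
lemma bw_ne: "bw c d S \<noteq> []" by (simp add: bw_def NN_def)

lemma XX_rw: "reduced_word XX" "wd XX"
  using red_bwSd[of "(a,True)" "(b,True)"] ab wd_bw[OF _ _ wd_Sd, of "(a,True)" "(b,True)"] aB bB
  by (auto simp: XX_def)

lemma XX_props1: "reduced_word (inv_w XX)" "wd (inv_w XX)"
  using XX_rw by simp_all

lemma XX_props2: "hd XX = (a,True)" "last XX = (a,True)"
  "hd (inv_w XX) = (a,False)" "last (inv_w XX) = (a,False)"
  "XX \<noteq> []" "inv_w XX \<noteq> []"
  by (auto simp: XX_def hd_bw last_bw inv_bw bw_ne inv_l_def simp del: inv_w_Nil_iff)

lemmas XX_props = XX_rw XX_props1 XX_props2

lemma YY_rw: "reduced_word YY" "wd YY"
  using red_bwSd[of "(b,True)" "(a,True)"] ab wd_bw[OF _ _ wd_Sd, of "(b,True)" "(a,True)"] aB bB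
  by (auto simp: YY_def)

lemma YY_props1: "reduced_word (inv_w YY)" "wd (inv_w YY)"
  using YY_rw by simp_all

lemma YY_props2: "hd YY = (b,True)" "last YY = (b,True)"
  "hd (inv_w YY) = (b,False)" "last (inv_w YY) = (b,False)"
  "YY \<noteq> []" "inv_w YY \<noteq> []"
  by (auto simp: YY_def hd_bw last_bw inv_bw bw_ne inv_l_def simp del: inv_w_Nil_iff)

lemmas YY_props = YY_rw YY_props1 YY_props2

lemma XX_good: "good NN MM XX (a,True) (b,True)" "good NN MM (inv_w XX) (a,False) (b,False)"
  using good_bw[OF len_Sd] good_bw[OF len_inv_Sd] ab by (auto simp: XX_def inv_bw inv_l_def)
lemma YY_good: "good NN MM YY (b,True) (a,True)" "good NN MM (inv_w YY) (b,False) (a,False)"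
  using good_bw[OF len_Sd] good_bw[OF len_inv_Sd] ab by (auto simp: YY_def inv_bw inv_l_def)

lemma XX_u: "take (length u) (drop (NN+2) XX) = u" "take (length u) (drop (NN+2) (inv_w XX)) = u"
  using u_in_bw inv_Sd by (auto simp: XX_def inv_bw Sd_def)
lemma YY_u: "take (length u) (drop (NN+2) YY) = u" "take (length u) (drop (NN+2) (inv_w YY)) = u"
  using u_in_bw inv_Sd by (auto simp: YY_def inv_bw Sd_def)


definition "xx = val XX"
definition "yy = val YY"
definition "LL = 2*NN+MM+2"

lemma xx_c: "xx \<in> carrier F" and yy_c: "yy \<in> carrier F"
  using XX_props YY_props by (auto simp: xx_def yy_def)
lemma nf_xx: "nf xx = XX" and nf_yy: "nf yy = YY"
  using XX_props YY_props nf_val by (auto simp: xx_def yy_def)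
lemma xy_ne: "xx \<noteq> yy"
proof
  assume "xx = yy"
  then have "XX = YY" using nf_xx nf_yy by simp
  then show False using XX_props2(1) YY_props2(1) ab by simp
qed

definition "bl l = (if fst l = xx then (if snd l then XX else inv_w XX) else (if snd l then YY else inv_w YY))"
definition "phi l = (if fst l = xx then (a, snd l) else (b, snd l))"
definition "HL w \<longleftrightarrow> fst ` set w \<subseteq> {xx, yy}"

lemma HL_Cons[simp]: "HL (l # w) \<longleftrightarrow> fst l \<in> {xx,yy} \<and> HL w" by (auto simp: HL_def)
lemma HL_append[simp]: "HL (v @ w) \<longleftrightarrow> HL v \<and> HL w" by (auto simp: HL_def)
lemma HL_Nil[simp]: "HL []" by (auto simp: HL_def)
lemma HL_carr: "HL w \<Longrightarrow> fst ` set w \<subseteq> carrier F" using xx_c yy_c by (auto simp: HL_def)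

lemma bl_props: assumes "fst l \<in> {xx,yy}"
  shows "reduced_word (bl l)" "wd (bl l)" "bl l \<noteq> []" "hd (bl l) = phi l" "last (bl l) = phi l"
    "length (bl l) = LL" "\<exists>c d. good NN MM (bl l) c d" "take (length u) (drop (NN+2) (bl l)) = u"
    "val (bl l) = lv l"
proof -
  have gl: "length w = LL" if "good NN MM w c d" for w c d using that by (simp add: good_def LL_def)
  note X = XX_props XX_good XX_u and Y = YY_props YY_good YY_u
  show "reduced_word (bl l)" "wd (bl l)" "bl l \<noteq> []" "hd (bl l) = phi l" "last (bl l) = phi l"
    "length (bl l) = LL" "\<exists>c d. good NN MM (bl l) c d" "take (length u) (drop (NN+2) (bl l)) = u"
    using assms X Y xy_ne gl by (auto simp: bl_def phi_def simp del: inv_w_Nil_iff)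
  show "val (bl l) = lv l" using assms xy_ne XX_props YY_props xx_c yy_c wd_carr
    by (auto simp: bl_def lv_def val_inv_w xx_def[symmetric] yy_def[symmetric])
qed

lemma phi_adj: assumes "fst l \<in> {xx,yy}" "fst m \<in> {xx,yy}" "m \<noteq> inv_l l"
  shows "phi m \<noteq> inv_l (phi l)"
  using assms ab xy_ne by (cases l; cases m) (auto simp: phi_def inv_l_def)

lemma hd_concat_bl: "HL w \<Longrightarrow> w \<noteq> [] \<Longrightarrow> hd (concat (map bl w)) = phi (hd w)"
  by (cases w) (auto simp: bl_props)

lemma red_concat_bl: "HL w \<Longrightarrow> reduced_word w \<Longrightarrow> reduced_word (concat (map bl w))"
proof (induct w)
  case (Cons l w)
  then have h: "fst l \<in> {xx,yy}" "HL w" "reduced_word w" "w = [] \<or> hd w \<noteq> inv_l l"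
    by (auto simp: red_Cons)
  have ih: "reduced_word (concat (map bl w))" using Cons.hyps h by simp
  show ?case
  proof (cases w)
    case Nil
    then show ?thesis using bl_props h by simp
  next
    case (Cons m w')
    then have "phi m \<noteq> inv_l (phi l)" using phi_adj h by auto
    moreover have "hd (concat (map bl w)) = phi m" using hd_concat_bl[OF h(2)] by (simp add: Cons)
    ultimately have "reduced_word (bl l @ concat (map bl w))" using ih bl_props[OF h(1)] Cons
      by (simp add: red_append)
    then show ?thesis by simp
  qed
qed simp

lemma wd_concat_bl: "HL w \<Longrightarrow> wd (concat (map bl w))"
  by (induct w) (auto simp: bl_props)

lemma val_concat_bl: "HL w \<Longrightarrow> val (concat (map bl w)) = word_eval F w"
proof (induct w)
  case (Cons l w)
  then have h: "fst l \<in> {xx,yy}" "HL w" by auto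
  have "val (concat (map bl (l # w))) = val (bl l) \<otimes> val (concat (map bl w))"
    using val_append[OF wd_carr[OF bl_props(2)[OF h(1)]] wd_carr[OF wd_concat_bl[OF h(2)]]] by simp
  then show ?case using Cons h bl_props[OF h(1)] by (simp add: val_Cons)
qed simp

lemma length_concat_bl: "HL w \<Longrightarrow> length (concat (map bl w)) = length w * LL"
  by (induct w) (auto simp: bl_props)

definition "HH = generate F {xx, yy}"

lemma HH_sub: "subgroup HH F" unfolding HH_def using xx_c yy_c by (intro generate_is_subgroup) auto

lemma HL_in_HH: "HL w \<Longrightarrow> word_eval F w \<in> HH"
proof (induct w)
  case Nil
  then show ?case using HH_sub subgroup.one_closed by simp
next
  case (Cons l w)
  then have h: "fst l \<in> {xx,yy}" "HL w" by auto
  have "lv l \<in> HH" using h unfolding HH_def lv_def by (auto intro: generate.incl generate.inv)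
  then show ?case using Cons h by (simp add: val_Cons HH_def generate.eng)
qed

lemma HH_words: "h \<in> HH \<Longrightarrow> \<exists>w. HL w \<and> reduced_word w \<and> word_eval F w = h"
  using exists_red_word[of h "{xx,yy}"] xx_c yy_c by (auto simp: HH_def HL_def)

lemma cyc_red: "HL w \<Longrightarrow> reduced_word w \<Longrightarrow> w \<noteq> [] \<Longrightarrow>
  \<exists>t\<in>HH. \<exists>w'. HL w' \<and> reduced_word w' \<and> w' \<noteq> [] \<and> hd w' \<noteq> inv_l (last w') \<and>
     word_eval F w = t \<otimes> word_eval F w' \<otimes> inv t"
proof (induct "length w" arbitrary: w rule: less_induct)
  case less
  show ?case
  proof (cases "hd w \<noteq> inv_l (last w)")
    case True
    have "word_eval F w \<in> carrier F" using val_closed[OF HL_carr[OF less(2)]] .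
    then show ?thesis using True less HH_sub subgroup.one_closed by (intro bexI[of _ \<one>]) auto
  next
    case False
    obtain l \<rho> where w: "w = l # \<rho>" using less by (cases w) auto
    have \<rho>ne: "\<rho> \<noteq> []" using False w by auto
    define w0 where "w0 = butlast \<rho>"
    have \<rho>eq: "\<rho> = w0 @ [inv_l l]" using False w \<rho>ne by (simp add: w0_def inv_l_swap)
    have w0ne: "w0 \<noteq> []" using less(3) w \<rho>eq by (auto simp: red_Cons)
    have hl: "fst l \<in> {xx,yy}" "HL w0" using less(2) w \<rho>eq by auto
    have rw0: "reduced_word w0" using less(3) w \<rho>eq by (simp add: red_Cons red_append)
    obtain t0 w' where t0: "t0 \<in> HH" "HL w'" "reduced_word w'" "w' \<noteq> []" "hd w' \<noteq> inv_l (last w')"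
       "word_eval F w0 = t0 \<otimes> word_eval F w' \<otimes> inv t0"
      using less(1)[of w0] w \<rho>eq hl rw0 w0ne by auto
    have lc: "lv l \<in> carrier F" using hl xx_c yy_c by auto
    have t0c: "t0 \<in> carrier F" using subgroup.mem_carrier[OF HH_sub t0(1)] .
    have w'c: "word_eval F w' \<in> carrier F" using val_closed[OF HL_carr[OF t0(2)]] .
    have "word_eval F w = lv l \<otimes> word_eval F w0 \<otimes> inv (lv l)"
      using w \<rho>eq hl HL_carr[of w0] lc xx_c yy_c
      by (auto simp: val_Cons val_append lv_inv_l m_assoc)
    also have "\<dots> = (lv l \<otimes> t0) \<otimes> word_eval F w' \<otimes> inv (lv l \<otimes> t0)"
      using t0(6) lc t0c w'c by (simp add: m_assoc inv_mult_group)
    finally have eq: "word_eval F w = (lv l \<otimes> t0) \<otimes> word_eval F w' \<otimes> inv (lv l \<otimes> t0)" .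
    have "lv l \<in> HH" using hl unfolding HH_def lv_def by (auto intro: generate.incl generate.inv)
    then have "lv l \<otimes> t0 \<in> HH" using subgroup.m_closed[OF HH_sub _ t0(1)] by simp
    then show ?thesis using eq t0 by blast
  qed
qed

end


context fb
begin

lemma conj_nf:
  assumes g: "g \<in> carrier F" and R: "wd Rm" "reduced_word Rm"
  shows "\<exists>j \<le> length (nf g). \<forall>p l. length (nf g) \<le> p \<longrightarrow> p + l + length (nf g) \<le> length Rm \<longrightarrow>
     (\<forall>i<l. nf (g \<otimes> val Rm \<otimes> inv g) ! (length (nf g) - j + (p - j) + i) = Rm ! (p + i)) \<and>
     val (take (length (nf g) - j + (p - j)) (nf (g \<otimes> val Rm \<otimes> inv g))) = g \<otimes> val (take p Rm) \<and>
     length (nf g) - j + (p - j) + l \<le> length (nf (g \<otimes> val Rm \<otimes> inv g))"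
proof -
  define G where "G = nf g"
  define r where "r = val Rm"
  have rc: "r \<in> carrier F" using R by (simp add: r_def)
  have nfr: "nf r = Rm" using nf_val R by (simp add: r_def)
  note pg = nf_props[OF g]
  obtain j1 where j1: "j1 \<le> length G" "j1 \<le> length Rm" "drop (length G - j1) G = inv_w (take j1 Rm)"
     "nf (g \<otimes> r) = take (length G - j1) G @ drop j1 Rm"
    using nf_mult[OF g rc] nfr by (auto simp: G_def)
  define V where "V = nf (g \<otimes> r)"
  have grc: "g \<otimes> r \<in> carrier F" using g rc by simp
  have nfi: "nf (inv g) = inv_w G" using nf_inv[OF g] by (simp add: G_def)
  obtain j2 where j2: "j2 \<le> length V" "j2 \<le> length G"
     "nf (g \<otimes> r \<otimes> inv g) = take (length V - j2) V @ drop j2 (inv_w G)"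
    using nf_mult[OF grc inv_closed[OF g]] nfi by (auto simp: V_def)
  define D where "D = length G - j1"
  have lV: "length V = D + (length Rm - j1)" using j1 by (simp add: V_def D_def)
  define W where "W = nf (g \<otimes> r \<otimes> inv g)"
  have main: "(\<forall>i<l. W ! (D + (p - j1) + i) = Rm ! (p + i)) \<and>
     val (take (D + (p - j1)) W) = g \<otimes> val (take p Rm) \<and> D + (p - j1) + l \<le> length W"
    if p: "length G \<le> p" "p + l + length G \<le> length Rm" for p l
  proof -
    have pj: "j1 \<le> p" using p j1 by simp
    have bound: "D + (p - j1) + l \<le> length V - j2" using p j1 j2 lV by (simp add: D_def)
    have Wt: "take (length V - j2) V = take (length V - j2) (take D G @ drop j1 Rm)"
      using j1 by (simp add: V_def D_def)
    have n1: "\<forall>i<l. W ! (D + (p - j1) + i) = Rm ! (p + i)"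
    proof (intro allI impI)
      fix i assume i: "i < l"
      have "W ! (D + (p - j1) + i) = V ! (D + (p - j1) + i)"
        using bound i j2(3) by (simp add: W_def nth_append)
      also have "\<dots> = (drop j1 Rm) ! (p - j1 + i)"
      proof -
        have VD: "V = take D G @ drop j1 Rm" using j1 by (simp add: V_def D_def)
        have lD: "length (take D G) = D" by (simp add: D_def)
        have "(take D G @ drop j1 Rm) ! (length (take D G) + (p - j1 + i)) = drop j1 Rm ! (p - j1 + i)"
          by (rule nth_append_length_plus)
        then show ?thesis unfolding VD lD by (simp add: add.assoc)
      qed
      also have "\<dots> = Rm ! (p + i)" using pj p i by simp
      finally show "W ! (D + (p - j1) + i) = Rm ! (p + i)" .
    qed
    have tW: "take (D + (p - j1)) W = take D G @ take (p - j1) (drop j1 Rm)"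
    proof -
      have "take (D + (p - j1)) W = take (D + (p - j1)) V" using bound j2(3)
        by (auto simp: W_def take_append min_def)
      also have "\<dots> = take D G @ take (p - j1) (drop j1 Rm)"
      proof -
        have VD: "V = take D G @ drop j1 Rm" using j1 by (simp add: V_def D_def)
        have lD: "length (take D G) = D" by (simp add: D_def)
        show ?thesis unfolding VD using take_append[of "D + (p - j1)" "take D G" "drop j1 Rm"]
          unfolding lD by simp
      qed
      finally show ?thesis .
    qed
    have wA: "wd (take D G)" "wd (drop D G)" using pg wd_take wd_drop by (auto simp: G_def)
    have wT: "wd (take j1 Rm)" "wd (take (p - j1) (drop j1 Rm))" using R wd_take wd_drop by auto
    have "g = val (take D G) \<otimes> val (drop D G)"
      using pg val_take_drop[OF wd_carr[OF pg(1)], of D] by (simp add: G_def)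
    also have "\<dots> = val (take D G) \<otimes> inv (val (take j1 Rm))"
      using j1(3) val_inv_w[OF wd_carr[OF wT(1)]] by (simp add: D_def)
    finally have geq: "g = val (take D G) \<otimes> inv (val (take j1 Rm))" .
    have "take p Rm = take j1 Rm @ take (p - j1) (drop j1 Rm)" using pj
      by (metis le_add_diff_inverse take_add)
    then have vp: "val (take p Rm) = val (take j1 Rm) \<otimes> val (take (p - j1) (drop j1 Rm))"
      using val_append[OF wd_carr[OF wT(1)] wd_carr[OF wT(2)]] by simp
    have "val (take (D + (p - j1)) W) = val (take D G) \<otimes> val (take (p - j1) (drop j1 Rm))"
      using tW val_append[OF wd_carr[OF wA(1)] wd_carr[OF wT(2)]] by simp
    also have "\<dots> = g \<otimes> val (take p Rm)"
      using geq vp wA wT by (simp add: m_assoc m_assoc[symmetric, of "inv (val (take j1 Rm))"])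
    finally have n2: "val (take (D + (p - j1)) W) = g \<otimes> val (take p Rm)" .
    have "length W = length V - j2 + (length G - j2)" using j2 by (simp add: W_def)
    then have n3: "D + (p - j1) + l \<le> length W" using bound by simp
    show ?thesis using n1 n2 n3 by simp
  qed
  show ?thesis using main j1(1) unfolding W_def G_def D_def r_def by blast
qed

lemma wd_concat_rep: "wd R \<Longrightarrow> wd (concat (replicate m R))"
  by (induct m) auto

lemma conj_pow:
  assumes K: "subgroup K F" and z: "z \<in> carrier F" and R: "wd R" and k: "z \<otimes> val R \<otimes> inv z \<in> K"
  shows "z \<otimes> val (concat (replicate m R)) \<otimes> inv z \<in> K"
proof (induct m)
  case 0
  then show ?case using z subgroup.one_closed[OF K] by simp
next
  case (Suc m)
  have c: "val R \<in> carrier F" "val (concat (replicate m R)) \<in> carrier F"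
    using R wd_concat_rep[OF R] by auto
  have "z \<otimes> val (concat (replicate (Suc m) R)) \<otimes> inv z =
     (z \<otimes> val R \<otimes> inv z) \<otimes> (z \<otimes> val (concat (replicate m R)) \<otimes> inv z)"
    using val_append[OF wd_carr[OF R] wd_carr[OF wd_concat_rep[OF R]], of m] c z
    by (simp add: m_assoc m_assoc[symmetric, of "inv z" z])
  then show ?case using subgroup.m_closed[OF K k Suc] by simp
qed

end

context blkl
begin

lemma red_pow: assumes "reduced_word w" "w \<noteq> []" "hd w \<noteq> inv_l (last w)"
  shows "reduced_word (concat (replicate m w))"
proof (induct m)
  case (Suc m)
  show ?case
  proof (cases m)
    case 0
    then show ?thesis using assms by simp
  next
    case (Suc m')
    have "hd (concat (replicate m w)) = hd w" using Suc assms(2) by simp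
    then show ?thesis using Suc.hyps assms by (simp add: red_append)
  qed
qed simp

lemma HL_pow: "HL w \<Longrightarrow> HL (concat (replicate m w))"
  by (induct m) auto

lemma bl_pow: "concat (map bl (concat (replicate m w))) = concat (replicate m (concat (map bl w)))"
  by (induct m) auto

lemma Rm_nth: assumes "w \<noteq> []" "HL w" "n < m" "i < LL"
  shows "concat (replicate m (concat (map bl w))) ! (n * length (concat (map bl w)) + i) = bl (hd w) ! i"
proof -
  define R where "R = concat (map bl w)"
  obtain k where m: "m = n + Suc k" using assms(3) by (metis add_Suc_right less_imp_Suc_add)
  have "concat (replicate m R) = concat (replicate n R) @ (R @ concat (replicate k R))"
    by (simp only: m replicate_add concat_append replicate_Suc concat.simps(2))
  moreover have "length (concat (replicate n R)) = n * length R" by (induct n) auto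
  moreover have "R = bl (hd w) @ concat (map bl (tl w))" using assms(1) by (cases w) (auto simp: R_def)
  moreover have "length (bl (hd w)) = LL" using assms(1,2) bl_props by (cases w) auto
  ultimately show ?thesis using assms(4) by (simp add: nth_append R_def[symmetric])
qed

lemma take_Rm: "n \<le> m \<Longrightarrow> take (n * length R) (concat (replicate m R)) = concat (replicate n R)"
  using take_concat_unif[of "replicate m R" "length R" n] by (simp add: min_def)

lemma length_R: "HL w \<Longrightarrow> w \<noteq> [] \<Longrightarrow> LL \<le> length (concat (map bl w))"
  using length_concat_bl[of w] by (cases w) auto

lemma length_Rm: "length (concat (replicate m R)) = m * length R"
  by (induct m) auto


lemma canc1: "x \<in> carrier F \<Longrightarrow> y \<in> carrier F \<Longrightarrow> inv x \<otimes> (x \<otimes> y) = y"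
  by (simp add: m_assoc[symmetric])
lemma canc2: "x \<in> carrier F \<Longrightarrow> y \<in> carrier F \<Longrightarrow> x \<otimes> (inv x \<otimes> y) = y"
  by (simp add: m_assoc[symmetric])

lemma bl_nth_u: "fst l \<in> {xx,yy} \<Longrightarrow> i < length u \<Longrightarrow> bl l ! (NN + 2 + i) = u ! i"
proof -
  assume l: "fst l \<in> {xx,yy}" and i: "i < length u"
  have len: "NN + 2 + i < length (bl l)" using bl_props(6)[OF l] i by (simp add: LL_def NN_def MM_def)
  have "u ! i = take (length u) (drop (NN+2) (bl l)) ! i" using bl_props(8)[OF l] by simp
  also have "\<dots> = bl l ! (NN + 2 + i)" using i len by simp
  finally show ?thesis by simp
qed

lemma arith1: assumes "LL \<le> (r::nat)" "x + NN + 2 \<le> LL"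
  shows "n0 \<le> n0 * r + x" "n0 * r + x + n0 \<le> (2 * n0 + 2) * r"
proof -
  have r1: "1 \<le> r" using assms by (simp add: LL_def)
  have "n0 * 1 \<le> n0 * r" using r1 by (rule mult_le_mono2)
  then have "n0 \<le> n0 * r" by simp
  then show "n0 \<le> n0 * r + x" by (rule trans_le_add1)
  have "(2 * n0 + 2) * r = n0 * r + n0 * r + r + r" by (simp add: algebra_simps)
  moreover have "x \<le> r" using assms by simp
  ultimately show "n0 * r + x + n0 \<le> (2 * n0 + 2) * r" using \<open>n0 \<le> n0 * r\<close> by linarith
qed

lemma arith2: assumes "LL \<le> (r::nat)"
  shows "n0 * r + LL + n0 \<le> (2 * n0 + 2) * r"
proof -
  have r1: "1 \<le> r" using assms by (simp add: LL_def)
  have "n0 * 1 \<le> n0 * r" using r1 by (rule mult_le_mono2)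
  then have a: "n0 \<le> n0 * r" by simp
  have "(2 * n0 + 2) * r = n0 * r + n0 * r + r + r" by (simp add: algebra_simps)
  then show ?thesis using a assms by linarith
qed

lemma no_conj:
  assumes K: "subgroup K F" and Qc: "Q \<subseteq> carrier F"
    and pref: "\<And>k p. k \<in> K \<Longrightarrow> val (take p (nf k)) \<in> KQ K Q"
    and up: "\<forall>q\<in>Q. \<exists>p. q \<otimes> val (take p u) \<notin> KQ K Q"
    and h: "h \<in> HH" "h \<noteq> \<one>" and g: "g \<in> carrier F" and k: "k \<in> K" and eq: "h = g \<otimes> k \<otimes> inv g"
  shows False
proof -
  obtain w where w: "HL w" "reduced_word w" "word_eval F w = h" using HH_words[OF h(1)] by blast
  have wne: "w \<noteq> []" using w h by auto
  obtain t w' where t: "t \<in> HH" "HL w'" "reduced_word w'" "w' \<noteq> []" "hd w' \<noteq> inv_l (last w')"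
     "word_eval F w = t \<otimes> word_eval F w' \<otimes> inv t" using cyc_red[OF w(1,2) wne] by blast
  define r where "r = word_eval F w'"
  define R where "R = concat (map bl w')"
  have vR: "val R = r" using val_concat_bl[OF t(2)] by (simp add: R_def r_def)
  have wR: "wd R" using wd_concat_bl[OF t(2)] by (simp add: R_def)
  have tc: "t \<in> carrier F" using subgroup.mem_carrier[OF HH_sub t(1)] .
  have rc: "r \<in> carrier F" using val_closed[OF HL_carr[OF t(2)]] by (simp add: r_def)
  have kc: "k \<in> carrier F" using subgroup.mem_carrier[OF K k] .
  define z where "z = inv g \<otimes> t"
  have zc: "z \<in> carrier F" using g tc by (simp add: z_def)
  have kz: "z \<otimes> r \<otimes> inv z = k"
  proof -
    have "z \<otimes> r \<otimes> inv z = inv g \<otimes> (t \<otimes> r \<otimes> inv t) \<otimes> g"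
      using g tc rc by (simp add: z_def m_assoc inv_mult_group)
    also have "\<dots> = inv g \<otimes> (g \<otimes> k \<otimes> inv g) \<otimes> g"
      using t(6) w(3) eq r_def by simp
    also have "\<dots> = k" using g kc by (simp add: m_assoc canc1)
    finally show ?thesis .
  qed
  define n0 where "n0 = length (nf z)"
  define m where "m = 2 * n0 + 2"
  define Rm where "Rm = concat (replicate m R)"
  have RmE: "Rm = concat (map bl (concat (replicate m w')))" by (simp add: Rm_def R_def bl_pow)
  have rRm: "reduced_word Rm" unfolding RmE
    using red_concat_bl[OF HL_pow[OF t(2)] red_pow[OF t(3,4,5)]] .
  have wRm: "wd Rm" using wd_concat_rep[OF wR] by (simp add: Rm_def)
  have kmK: "z \<otimes> val Rm \<otimes> inv z \<in> K"
    using conj_pow[OF K zc wR] kz vR k by (simp add: Rm_def)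
  define W where "W = nf (z \<otimes> val Rm \<otimes> inv z)"
  obtain j where j: "j \<le> n0" "\<forall>p l. n0 \<le> p \<longrightarrow> p + l + n0 \<le> length Rm \<longrightarrow>
     (\<forall>i<l. W ! (n0 - j + (p - j) + i) = Rm ! (p + i)) \<and>
     val (take (n0 - j + (p - j)) W) = z \<otimes> val (take p Rm) \<and>
     n0 - j + (p - j) + l \<le> length W"
    using conj_nf[OF zc wRm rRm] unfolding W_def n0_def by blast
  define p where "p = n0 * length R + (NN + 2)"
  have lR: "LL \<le> length R" using length_R[OF t(2,4)] by (simp add: R_def)
  have ar: "n0 \<le> p" "p + length u + n0 \<le> length Rm"
    using arith1[OF lR, of "NN + 2 + length u" n0] arith1[OF lR, of "NN + 2" n0]
    by (auto simp: p_def length_Rm Rm_def m_def LL_def NN_def MM_def add.assoc)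
  define pos where "pos = n0 - j + (p - j)"
  have P: "\<forall>i<length u. W ! (pos + i) = Rm ! (p + i)" "pos + length u \<le> length W"
    using j(2) ar unfolding pos_def by blast+
  have hdw: "fst (hd w') \<in> {xx,yy}" using t(2,4) by (cases w') auto
  have Wu: "W ! (pos + i) = u ! i" if i: "i < length u" for i
  proof -
    have "Rm ! (p + i) = Rm ! (n0 * length R + (NN + 2 + i))" by (simp add: p_def add.assoc)
    also have "\<dots> = bl (hd w') ! (NN + 2 + i)" unfolding Rm_def R_def
      using Rm_nth[OF t(4,2), of n0 m "NN + 2 + i"] i by (simp add: m_def LL_def NN_def MM_def)
    also have "\<dots> = u ! i" using bl_nth_u[OF hdw i] .
    finally show ?thesis using P(1) i by simp
  qed
  have tW: "take (pos + l) W = take pos W @ take l u" if l: "l \<le> length u" for l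
  proof -
    have "take l (drop pos W) = take l u"
      by (rule nth_equalityI) (use l P(2) Wu in auto)
    then show ?thesis by (simp add: take_add)
  qed
  have wW: "wd W" using nf_props kmK subgroup.mem_carrier[OF K] by (simp add: W_def)
  obtain \<kappa> q0 where kq: "\<kappa> \<in> K" "q0 \<in> Q" "val (take pos W) = \<kappa> \<otimes> q0"
    using pref[OF kmK, of pos] unfolding W_def[symmetric] by (auto simp: KQ_def)
  have kac: "\<kappa> \<in> carrier F" using subgroup.mem_carrier[OF K kq(1)] .
  have q0c: "q0 \<in> carrier F" using kq(2) Qc by auto
  have "q0 \<otimes> val (take p' u) \<in> KQ K Q" for p'
  proof -
    define l where "l = min p' (length u)"
    have l: "l \<le> length u" "take p' u = take l u" by (auto simp: l_def min_def)
    have wu: "wd (take l u)" using wu wd_take by simp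
    have "val (take (pos + l) W) \<in> KQ K Q" using pref[OF kmK, of "pos + l"] by (simp add: W_def)
    moreover have "val (take (pos + l) W) = \<kappa> \<otimes> (q0 \<otimes> val (take l u))"
      using tW[OF l(1)] val_append[OF wd_carr[OF wd_take[OF wW]] wd_carr[OF wu]] kq(3) kac q0c wu
      by (simp add: m_assoc)
    ultimately show ?thesis using KQ_inv_mult[OF K Qc kq(1)] q0c wu l(2) by simp
  qed
  then show False using up kq(2) by blast
qed


lemma maln:
  assumes g: "g \<in> carrier F" "g \<notin> HH" and h: "h \<in> HH" and gh: "g \<otimes> h \<otimes> inv g \<in> HH"
  shows "h = \<one>"
proof (rule ccontr)
  assume h1: "h \<noteq> \<one>"
  obtain w where w: "HL w" "reduced_word w" "word_eval F w = h" using HH_words[OF h(1)] by blast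
  have wne: "w \<noteq> []" using w h1 by auto
  obtain t w' where t: "t \<in> HH" "HL w'" "reduced_word w'" "w' \<noteq> []" "hd w' \<noteq> inv_l (last w')"
     "word_eval F w = t \<otimes> word_eval F w' \<otimes> inv t" using cyc_red[OF w(1,2) wne] by blast
  define r where "r = word_eval F w'"
  define R where "R = concat (map bl w')"
  have vR: "val R = r" using val_concat_bl[OF t(2)] by (simp add: R_def r_def)
  have wR: "wd R" using wd_concat_bl[OF t(2)] by (simp add: R_def)
  have tc: "t \<in> carrier F" using subgroup.mem_carrier[OF HH_sub t(1)] .
  have rc: "r \<in> carrier F" using val_closed[OF HL_carr[OF t(2)]] by (simp add: r_def)
  have rH: "r \<in> HH" using HL_in_HH[OF t(2)] by (simp add: r_def)
  define z where "z = g \<otimes> t"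
  have zc: "z \<in> carrier F" using g tc by (simp add: z_def)
  have zH: "z \<notin> HH"
  proof
    assume "z \<in> HH"
    then have "z \<otimes> inv t \<in> HH" using t(1) HH_sub by (simp add: subgroup.m_closed subgroup.m_inv_closed)
    moreover have "z \<otimes> inv t = g" using g tc by (simp add: z_def m_assoc)
    ultimately show False using g(2) by simp
  qed
  have kz: "z \<otimes> r \<otimes> inv z \<in> HH"
  proof -
    have "z \<otimes> r \<otimes> inv z = g \<otimes> (t \<otimes> r \<otimes> inv t) \<otimes> inv g"
      using g tc rc by (simp add: z_def m_assoc inv_mult_group)
    also have "\<dots> = g \<otimes> h \<otimes> inv g" using t(6) w(3) r_def by simp
    finally show ?thesis using gh by simp
  qed
  define n0 where "n0 = length (nf z)"
  define m where "m = 2 * n0 + 2"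
  define Rm where "Rm = concat (replicate m R)"
  have RmE: "Rm = concat (map bl (concat (replicate m w')))" by (simp add: Rm_def R_def bl_pow)
  have rRm: "reduced_word Rm" unfolding RmE
    using red_concat_bl[OF HL_pow[OF t(2)] red_pow[OF t(3,4,5)]] .
  have wRm: "wd Rm" using wd_concat_rep[OF wR] by (simp add: Rm_def)
  have kmK: "z \<otimes> val Rm \<otimes> inv z \<in> HH"
    using conj_pow[OF HH_sub zc wR] kz vR by (simp add: Rm_def)
  define W where "W = nf (z \<otimes> val Rm \<otimes> inv z)"
  obtain \<nu> where \<nu>: "HL \<nu>" "reduced_word \<nu>" "word_eval F \<nu> = z \<otimes> val Rm \<otimes> inv z"
    using HH_words[OF kmK] by blast
  have WE: "W = concat (map bl \<nu>)"
    using nf_val[OF wd_concat_bl[OF \<nu>(1)] red_concat_bl[OF \<nu>(1,2)]] val_concat_bl[OF \<nu>(1)] \<nu>(3)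
    by (simp add: W_def)
  obtain j where j: "j \<le> n0" "\<forall>p l. n0 \<le> p \<longrightarrow> p + l + n0 \<le> length Rm \<longrightarrow>
     (\<forall>i<l. W ! (n0 - j + (p - j) + i) = Rm ! (p + i)) \<and>
     val (take (n0 - j + (p - j)) W) = z \<otimes> val (take p Rm) \<and>
     n0 - j + (p - j) + l \<le> length W"
    using conj_nf[OF zc wRm rRm] unfolding W_def n0_def by blast
  define p where "p = n0 * length R"
  have lR: "LL \<le> length R" using length_R[OF t(2,4)] by (simp add: R_def)
  have ar: "n0 \<le> p" "p + LL + n0 \<le> length Rm"
    using arith1(1)[OF lR, of 0 n0] arith2[OF lR, of n0] NM
    by (auto simp: p_def length_Rm Rm_def m_def LL_def)
  define pos where "pos = n0 - j + (p - j)"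
  have P: "\<forall>i<LL. W ! (pos + i) = Rm ! (p + i)" "pos + LL \<le> length W"
    "val (take pos W) = z \<otimes> val (take p Rm)"
    using j(2) ar unfolding pos_def by blast+
  have hdw: "fst (hd w') \<in> {xx,yy}" using t(2,4) by (cases w') auto
  obtain c d where gd: "good NN MM (bl (hd w')) c d" using bl_props(7)[OF hdw] by blast
  have Wb: "concat (map bl \<nu>) ! (pos + i) = bl (hd w') ! i" if i: "i < 2*NN+MM+2" for i
  proof -
    have "Rm ! (p + i) = bl (hd w') ! i" unfolding Rm_def R_def p_def
      using Rm_nth[OF t(4,2), of n0 m i] i by (simp add: m_def LL_def R_def)
    then show ?thesis using P(1) i WE by (simp add: LL_def)
  qed
  have allg: "\<forall>w\<in>set (map bl \<nu>). \<exists>c d. good NN MM w c d"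
    using \<nu>(1) bl_props(7) by (auto simp: HL_def)
  have "(2*NN+MM+2) dvd pos"
    using aligned[OF NM allg gd Wb] P(2) WE by (simp add: LL_def)
  then obtain q where q: "pos = q * LL" by (auto simp: LL_def mult.commute elim!: dvdE)
  have lens: "\<forall>w\<in>set (map bl \<nu>). length w = LL" using \<nu>(1) bl_props(6) by (auto simp: HL_def)
  have "take pos W = concat (map bl (take q \<nu>))"
    using take_concat_unif[OF lens, of q] q WE by (simp add: take_map)
  moreover have "HL (take q \<nu>)" using \<nu>(1) set_take_subset[of q \<nu>] by (auto simp: HL_def)
  ultimately have A: "val (take pos W) \<in> HH" using val_concat_bl HL_in_HH by simp
  have "take p Rm = concat (replicate n0 R)" using take_Rm[of n0 m R] by (simp add: p_def Rm_def m_def)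
  then have B: "val (take p Rm) \<in> HH"
    using conj_pow[OF HH_sub one_closed wR, of n0] vR rH rc val_closed'[OF wd_concat_rep[OF wR], of n0] by simp
  have Bc: "val (take p Rm) \<in> carrier F" using subgroup.mem_carrier[OF HH_sub B] .
  have "z = val (take pos W) \<otimes> inv (val (take p Rm))"
    using P(3) zc Bc by (simp add: m_assoc)
  then have "z \<in> HH" using A B HH_sub by (simp add: subgroup.m_closed subgroup.m_inv_closed)
  then show False using zH by simp
qed

end


context blkl
begin

lemma eval_sub: "HL w \<Longrightarrow> word_eval (F\<lparr>carrier := HH\<rparr>) w = word_eval F w"
proof (induct w)
  case Nil
  then show ?case by (simp add: word_eval_def)
next
  case (Cons l w)
  obtain x s where l: "l = (x, s)" by force
  have xH: "x \<in> HH" using Cons l unfolding HH_def by (auto intro: generate.incl)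
  have "word_eval (F\<lparr>carrier := HH\<rparr>) (l # w) =
      (if s then x else inv\<^bsub>F\<lparr>carrier := HH\<rparr>\<^esub> x) \<otimes> word_eval (F\<lparr>carrier := HH\<rparr>) w"
    by (simp add: word_eval_def l)
  also have "\<dots> = (if s then x else inv x) \<otimes> word_eval F w"
    using Cons xH HH_sub by simp
  also have "\<dots> = word_eval F (l # w)" by (simp add: word_eval_def l)
  finally show ?case .
qed

lemma HH_free: "free_rank_2_subgroup F HH"
proof -
  have sub: "{xx, yy} \<subseteq> HH" unfolding HH_def by (auto intro: generate.incl)
  have gen: "generate (F\<lparr>carrier := HH\<rparr>) {xx, yy} = HH"
    using generate_consistent[OF sub HH_sub] by (simp add: HH_def)
  have nz: "word_eval (F\<lparr>carrier := HH\<rparr>) w \<noteq> \<one>\<^bsub>F\<lparr>carrier := HH\<rparr>\<^esub>"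
    if w: "set (map fst w) \<subseteq> {xx, yy}" "w \<noteq> []" "reduced_word w" for w
  proof -
    have hl: "HL w" using w by (simp add: HL_def)
    have ne: "concat (map bl w) \<noteq> []" using hl w(2) bl_props(3) by (cases w) auto
    have "val (concat (map bl w)) \<noteq> \<one>"
      using freeness[OF wd_concat_bl[OF hl] ne red_concat_bl[OF hl w(3)]] .
    then show ?thesis using eval_sub[OF hl] val_concat_bl[OF hl] by simp
  qed
  have "free_basis (F\<lparr>carrier := HH\<rparr>) {xx, yy}"
    unfolding free_basis_def using sub gen nz by simp
  then show ?thesis unfolding free_rank_2_subgroup_def using HH_sub xy_ne by blast
qed

lemma HH_maln: "malnormal F HH"
  unfolding malnormal_def
proof (intro ballI equalityI subsetI)
  fix g z assume g: "g \<in> carrier F - HH" and z: "z \<in> {g \<otimes> h \<otimes> inv g |h. h \<in> HH} \<inter> HH"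
  then obtain h where h: "h \<in> HH" "z = g \<otimes> h \<otimes> inv g" by blast
  then have "h = \<one>" using maln[of g h] g z by auto
  then show "z \<in> {\<one>}" using h g by simp
next
  fix g z assume g: "g \<in> carrier F - HH" and z: "z \<in> {\<one>}"
  have "\<one> = g \<otimes> \<one> \<otimes> inv g" using g by simp
  then show "z \<in> {g \<otimes> h \<otimes> inv g |h. h \<in> HH} \<inter> HH"
    using z subgroup.one_closed[OF HH_sub] by blast
qed

end

lemma two_elems: assumes "infinite B \<or> card B \<ge> 2" shows "\<exists>a b. a \<in> B \<and> b \<in> B \<and> a \<noteq> b"
proof (rule ccontr)
  assume "\<not> ?thesis"
  then have all: "\<forall>a1\<in>B. \<forall>a2\<in>B. a1 = a2" by blast
  then have fin: "finite B"
    by (metis finite.emptyI finite_insert subsetI singletonI insertCI subset_singletonD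
        finite_subset equals0I)
  then have "card B \<le> Suc 0" using card_le_Suc0_iff_eq all by blast
  then show False using assms fin by simp
qed

theorem mainTheorem9:
  fixes F :: "('a, 'b) monoid_scheme" and K :: "nat \<Rightarrow> 'a set" and n :: nat
  assumes "free_group_rank_ge_2 F"
    and "\<And>i. i < n \<Longrightarrow> subgroup (K i) F"
    and "\<And>i. i < n \<Longrightarrow> finitely_generated_subgroup F (K i)"
    and "\<And>i. i < n \<Longrightarrow> infinite (rcosets\<^bsub>F\<^esub> (K i))"
  shows "\<exists>H. free_rank_2_subgroup F H \<and> malnormal F H \<and>
           (\<forall>h \<in> H. h \<noteq> \<one>\<^bsub>F\<^esub> \<longrightarrow>
              \<not> (\<exists>g \<in> carrier F. \<exists>i < n. \<exists>k \<in> K i. h = g \<otimes>\<^bsub>F\<^esub> k \<otimes>\<^bsub>F\<^esub> inv\<^bsub>F\<^esub> g))"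
proof -
  obtain B where grp: "group F" and fbB: "free_basis F B" and card: "infinite B \<or> card B \<ge> 2"
    using assms(1) by (auto simp: free_group_rank_ge_2_def)
  interpret fb F B using grp fbB by (simp add: fb_def fb_axioms_def)
  obtain a b where ab: "a \<in> B" "b \<in> B" "a \<noteq> b" using two_elems[OF card] by blast
  have "\<forall>i. \<exists>S. i < n \<longrightarrow> finite S \<and> S \<subseteq> carrier F \<and> K i = generate F S"
    using assms(3) by (auto simp: finitely_generated_subgroup_def)
  then obtain S where S: "\<And>i. i < n \<Longrightarrow> finite (S i) \<and> S i \<subseteq> carrier F \<and> K i = generate F (S i)"
    by metis
  define Q where "Q i = Qset (S i)" for i
  define P where "P = Sigma {..<n} Q"
  have Qf: "\<And>i. i < n \<Longrightarrow> finite (Q i) \<and> Q i \<subseteq> carrier F"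
    using S Qset_finite Qset_carr by (auto simp: Q_def)
  have finP: "finite P" using Qf by (auto simp: P_def intro!: finite_SigmaI)
  have hP: "\<forall>(i,q)\<in>P. subgroup (K i) F \<and> finite (Q i) \<and> Q i \<subseteq> carrier F \<and>
        infinite (rcosets\<^bsub>F\<^esub> (K i)) \<and> q \<in> carrier F"
    using assms(2,4) Qf by (auto simp: P_def)
  obtain u where u: "wd u" "reduced_word u" "u \<noteq> []"
     "\<forall>(i,q)\<in>P. \<exists>p. q \<otimes>\<^bsub>F\<^esub> val (take p u) \<notin> KQ (K i) (Q i)"
    using u_exists[OF finP hP ab] by blast
  interpret blkl F B a b u using ab u by unfold_locales auto
  have avoid: "\<not> (\<exists>g \<in> carrier F. \<exists>i < n. \<exists>k \<in> K i. h = g \<otimes>\<^bsub>F\<^esub> k \<otimes>\<^bsub>F\<^esub> inv\<^bsub>F\<^esub> g)"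
    if h: "h \<in> HH" "h \<noteq> \<one>\<^bsub>F\<^esub>" for h
  proof
    assume "\<exists>g \<in> carrier F. \<exists>i < n. \<exists>k \<in> K i. h = g \<otimes>\<^bsub>F\<^esub> k \<otimes>\<^bsub>F\<^esub> inv\<^bsub>F\<^esub> g"
    then obtain g i k where g: "g \<in> carrier F" "i < n" "k \<in> K i" "h = g \<otimes>\<^bsub>F\<^esub> k \<otimes>\<^bsub>F\<^esub> inv\<^bsub>F\<^esub> g" by blast
    have pref: "\<And>k p. k \<in> K i \<Longrightarrow> val (take p (nf k)) \<in> KQ (K i) (Q i)"
      using lemmaA S[OF g(2)] by (auto simp: Q_def)
    have up: "\<forall>q\<in>Q i. \<exists>p. q \<otimes>\<^bsub>F\<^esub> val (take p u) \<notin> KQ (K i) (Q i)"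
      using u(4) g(2) by (auto simp: P_def)
    show False using no_conj[OF assms(2)[OF g(2)] conjunct2[OF Qf[OF g(2)]] pref up h g(1,3,4)] .
  qed
  show ?thesis using HH_free HH_maln avoid by blast
qed



end
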